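(* Let $\overrightarrow{W}$ be a Morse sequence on a simplicial complex $K$. Then for every $p$, $\overline O[p]=\{c\in K[p]:\overline\Phi_p(c)=c\}$ and $\underline O[p]=\{c\in K[p]:\underline\Phi_p(c)=c\}$.
   Context: A simplicial complex $K$ is a finite collection of non-empty finite sets closed under taking non-empty subsets; $\dim\sigma=|\sigma|-1$, $K^{(p)}$ the set of $p$-simplices. A pair $(\sigma,\tau)$ with $\sigma\subsetneq\tau$ is a free pair for $K$ if $\tau$ is the only simplex other than $\sigma$ containing $\sigma$; $K$ is then an elementary expansion of $K\setminus\{\sigma,\tau\}$. If $\nu$ is a facet (maximal simplex) of $K$, $K$ is an elementary filling of $K\setminus\{\nu\}$. A Morse sequence on $K$ is a sequence $\langle\emptyset=K_0,\dots,K_k=K\rangle$ with each $K_i$ an elementary expansion or filling of $K_{i-1}$; simplices added by fillings are critical; for an expansion $K_i=K_{i-1}\cup\{\sigma,\tau\}$, $\sigma\subset\tau$, $(\sigma,\tau)$ is a regular pair, $\sigma$ lower regular, $\tau$ upper regular. $\widehat W$ is the set of critical simplices. $K[p]$ is the $\mathbb{Z}_2$-vector space of subsets of $K^{(p)}$ (sum = symmetric difference, $0=\emptyset$), $\widehat W[p]=\{c\in K[p]:c\subseteq\widehat W\}$. For $\sigma\in K^{(p)}$, $\partial(\sigma)=\{\tau\in K^{(p-1)}:\tau\subset\sigma\}$, $\delta(\sigma)=\{\tau\in K^{(p+1)}:\sigma\subset\tau\}$, with linear extensions $\partial_p,\delta_p$. The reference map $\curlywedge$ is the unique map assigning to each $p$-simplex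 an element of $\widehat W[p]$, extended linearly, with $\curlywedge(\nu)=\{\nu\}$ for critical $\nu$ and $\curlywedge(\tau)=0=\curlywedge(\partial(\tau))$ for upper regular $\tau$; the coreference map $\curlyvee$ is the unique such map with $\curlyvee(\nu)=\{\nu\}$ for critical $\nu$ and $\curlyvee(\sigma)=0=\curlyvee(\delta(\sigma))$ for lower regular $\sigma$. Extension maps: $\widetilde\curlywedge_p,\widetilde\curlyvee_p:\widehat W[p]\to K[p]$ linear with $\widetilde\curlywedge(\kappa)=\{\nu\in K:\kappa\in\curlyvee(\nu)\}$, $\widetilde\curlyvee(\kappa)=\{\nu\in K:\kappa\in\curlywedge(\nu)\}$ for critical $\kappa$; $\overline O[p]=\operatorname{im}\widetilde\curlywedge_p$, $\underline O[p]=\operatorname{im}\widetilde\curlyvee_p$. Let $V_p:K[p]\to K[p+1]$ and $V^*_p:K[p]\to K[p-1]$ be the linear maps with $V(\kappa)=V^*(\kappa)=0$ for critical $\kappa$, and $V(\sigma)=\tau$, $V(\tau)=0$, $V^*(\sigma)=0$, $V^*(\tau)=\sigma$ for each regular pair $(\sigma,\tau)$. The flow and coflow are the linear maps $\Phi_p(\nu)=\nu+\partial_{p+1}(V_p(\nu))+V_{p-1}(\partial_p(\nu))$ and $\Phi^*_p(\nu)=\nu+\delta_{p-1}(V^*_p(\nu))+V^*_{p+1}(\delta_p(\nu))$ for $\nu\in K^{(p)}$. For each $c\in K[p]$ there are $i,j\ge0$ with $\Phi^{i+1}(c)=\Phi^i(c)$ and $(\Phi^* )^{j+1}(c)=(\Phi^*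 )^j(c)$; $\overline\Phi_p(c)=\Phi^i(c)$ and $\underline\Phi_p(c)=(\Phi^* )^j(c)$. *)

theory Defs
  imports Main
begin

text \<open>Simplices are finite non-empty sets of vertices of type 'a; a complex is a set of simplices.
  Chains over Z2 of dimension p are subsets of the set of p-simplices (sum = symmetric difference).\<close>

definition simplicial_complex :: "'a set set \<Rightarrow> bool" where
  "simplicial_complex K \<longleftrightarrow> finite K \<and> (\<forall>s\<in>K. finite s \<and> s \<noteq> {}) \<and>
     (\<forall>s\<in>K. \<forall>t. t \<subseteq> s \<and> t \<noteq> {} \<longrightarrow> t \<in> K)"

text \<open>p-simplices: dim s = card s - 1.\<close>
definition simplices :: "'a set set \<Rightarrow> nat \<Rightarrow> 'a set set" where
  "simplices K p = {s \<in> K. card s = Suc p}"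

definition free_pair :: "'a set set \<Rightarrow> 'a set \<Rightarrow> 'a set \<Rightarrow> bool" where
  "free_pair K \<sigma> \<tau> \<longleftrightarrow> \<sigma> \<subset> \<tau> \<and> \<sigma> \<in> K \<and> \<tau> \<in> K \<and> (\<forall>\<nu>\<in>K. \<sigma> \<subseteq> \<nu> \<longrightarrow> \<nu> = \<sigma> \<or> \<nu> = \<tau>)"

definition facet :: "'a set set \<Rightarrow> 'a set \<Rightarrow> bool" where
  "facet K \<nu> \<longleftrightarrow> \<nu> \<in> K \<and> (\<forall>\<mu>\<in>K. \<nu> \<subseteq> \<mu> \<longrightarrow> \<mu> = \<nu>)"

text \<open>A step of a Morse sequence: an elementary filling (adding a facet) or an elementary
  expansion (adding a free pair).\<close>
datatype 'a step = Fill "'a set" | Expand "'a set" "'a set"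

fun step_set :: "'a step \<Rightarrow> 'a set set" where
  "step_set (Fill \<nu>) = {\<nu>}"
| "step_set (Expand \<sigma> \<tau>) = {\<sigma>, \<tau>}"

definition cplx :: "'a step list \<Rightarrow> nat \<Rightarrow> 'a set set" where
  "cplx W i = \<Union> (step_set ` set (take i W))"

definition morse_seq :: "'a set set \<Rightarrow> 'a step list \<Rightarrow> bool" where
  "morse_seq K W \<longleftrightarrow> cplx W (length W) = K \<and>
     (\<forall>i < length W. simplicial_complex (cplx W (Suc i)) \<and>
        (case W ! i of
           Fill \<nu> \<Rightarrow> facet (cplx W (Suc i)) \<nu> \<and> \<nu> \<notin> cplx W i
         | Expand \<sigma> \<tau> \<Rightarrow> free_pair (cplx W (Suc i)) \<sigma> \<tau> \<and> \<sigma> \<notin> cplx W i \<and> \<tau> \<notin> cplx W i))"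

definition crit :: "'a step list \<Rightarrow> 'a set set" where
  "crit W = {\<nu>. Fill \<nu> \<in> set W}"

definition lower_reg :: "'a step list \<Rightarrow> 'a set set" where
  "lower_reg W = {\<sigma>. \<exists>\<tau>. Expand \<sigma> \<tau> \<in> set W}"

definition upper_reg :: "'a step list \<Rightarrow> 'a set set" where
  "upper_reg W = {\<tau>. \<exists>\<sigma>. Expand \<sigma> \<tau> \<in> set W}"

text \<open>Linear (Z2) extension of a map from simplices to chains: sum = symmetric difference.\<close>
definition lin :: "('b \<Rightarrow> 'c set) \<Rightarrow> 'b set \<Rightarrow> 'c set" where
  "lin f c = {x. odd (card {s \<in> c. x \<in> f s})}"

definition bd :: "'a set set \<Rightarrow> 'a set \<Rightarrow> 'a set set" where
  "bd K \<sigma> = {\<tau> \<in> K. \<tau> \<subset> \<sigma> \<and> card \<tau> + 1 = card \<sigma>}"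

definition cobd :: "'a set set \<Rightarrow> 'a set \<Rightarrow> 'a set set" where
  "cobd K \<sigma> = {\<tau> \<in> K. \<sigma> \<subset> \<tau> \<and> card \<tau> = card \<sigma> + 1}"

text \<open>Reference map: the unique map with values in critical chains of the same dimension,
  identity on critical simplices, and vanishing on upper regular tau and on their boundaries.\<close>
definition is_ref_map :: "'a set set \<Rightarrow> 'a step list \<Rightarrow> ('a set \<Rightarrow> 'a set set) \<Rightarrow> bool" where
  "is_ref_map K W f \<longleftrightarrow> (\<forall>s. s \<notin> K \<longrightarrow> f s = {}) \<and>
     (\<forall>s\<in>K. f s \<subseteq> {\<nu> \<in> crit W. card \<nu> = card s}) \<and>
     (\<forall>\<nu>\<in>crit W. f \<nu> = {\<nu>}) \<and>
     (\<forall>\<tau>\<in>upper_reg W. f \<tau> = {} \<and> lin f (bd K \<tau>) = {})"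

definition ref_map :: "'a set set \<Rightarrow> 'a step list \<Rightarrow> 'a set \<Rightarrow> 'a set set" where
  "ref_map K W = (THE f. is_ref_map K W f)"

definition is_coref_map :: "'a set set \<Rightarrow> 'a step list \<Rightarrow> ('a set \<Rightarrow> 'a set set) \<Rightarrow> bool" where
  "is_coref_map K W f \<longleftrightarrow> (\<forall>s. s \<notin> K \<longrightarrow> f s = {}) \<and>
     (\<forall>s\<in>K. f s \<subseteq> {\<nu> \<in> crit W. card \<nu> = card s}) \<and>
     (\<forall>\<nu>\<in>crit W. f \<nu> = {\<nu>}) \<and>
     (\<forall>\<sigma>\<in>lower_reg W. f \<sigma> = {} \<and> lin f (cobd K \<sigma>) = {})"

definition coref_map :: "'a set set \<Rightarrow> 'a step list \<Rightarrow> 'a set \<Rightarrow> 'a set set" where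
  "coref_map K W = (THE f. is_coref_map K W f)"

definition ext_ref :: "'a set set \<Rightarrow> 'a step list \<Rightarrow> 'a set \<Rightarrow> 'a set set" where
  "ext_ref K W \<kappa> = {\<nu> \<in> K. \<kappa> \<in> coref_map K W \<nu>}"

definition ext_coref :: "'a set set \<Rightarrow> 'a step list \<Rightarrow> 'a set \<Rightarrow> 'a set set" where
  "ext_coref K W \<kappa> = {\<nu> \<in> K. \<kappa> \<in> ref_map K W \<nu>}"

definition O_over :: "'a set set \<Rightarrow> 'a step list \<Rightarrow> nat \<Rightarrow> 'a set set set" where
  "O_over K W p = lin (ext_ref K W) ` Pow (crit W \<inter> simplices K p)"

definition O_under :: "'a set set \<Rightarrow> 'a step list \<Rightarrow> nat \<Rightarrow> 'a set set set" where
  "O_under K W p = lin (ext_coref K W) ` Pow (crit W \<inter> simplices K p)"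

definition symd :: "'b set \<Rightarrow> 'b set \<Rightarrow> 'b set" where
  "symd A B = (A - B) \<union> (B - A)"

definition Vf :: "'a step list \<Rightarrow> 'a set \<Rightarrow> 'a set set" where
  "Vf W \<sigma> = {\<tau>. Expand \<sigma> \<tau> \<in> set W}"

definition Vs :: "'a step list \<Rightarrow> 'a set \<Rightarrow> 'a set set" where
  "Vs W \<tau> = {\<sigma>. Expand \<sigma> \<tau> \<in> set W}"

definition flow :: "'a set set \<Rightarrow> 'a step list \<Rightarrow> 'a set set \<Rightarrow> 'a set set" where
  "flow K W = lin (\<lambda>\<nu>. symd (symd {\<nu>} (lin (bd K) (Vf W \<nu>))) (lin (Vf W) (bd K \<nu>)))"

definition coflow :: "'a set set \<Rightarrow> 'a step list \<Rightarrow> 'a set set \<Rightarrow> 'a set set" where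
  "coflow K W = lin (\<lambda>\<nu>. symd (symd {\<nu>} (lin (cobd K) (Vs W \<nu>))) (lin (Vs W) (cobd K \<nu>)))"

definition flow_bar :: "'a set set \<Rightarrow> 'a step list \<Rightarrow> 'a set set \<Rightarrow> 'a set set" where
  "flow_bar K W c = (flow K W ^^ (LEAST i. (flow K W ^^ Suc i) c = (flow K W ^^ i) c)) c"

definition coflow_bar :: "'a set set \<Rightarrow> 'a step list \<Rightarrow> 'a set set \<Rightarrow> 'a set set" where
  "coflow_bar K W c = (coflow K W ^^ (LEAST i. (coflow K W ^^ Suc i) c = (coflow K W ^^ i) c)) c"

end

theory Submission
  imports Defs
begin


lemma symd_mem[simp]: "x \<in> symd A B \<longleftrightarrow> (x \<in> A) \<noteq> (x \<in> B)"
  by (auto simp: symd_def)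

lemma lin_mem: "x \<in> lin f c \<longleftrightarrow> odd (card {s \<in> c. x \<in> f s})"
  by (simp add: lin_def)

lemma lin_empty[simp]: "lin f {} = {}"
  by (simp add: lin_def)

lemma lin_single[simp]: "lin f {a} = f a"
proof -
  have "{s \<in> {a}. x \<in> f s} = (if x \<in> f a then {a} else {})" for x by auto
  then show ?thesis by (auto simp: lin_def)
qed

lemma lin_sub: "lin f c \<subseteq> \<Union> (f ` c)"
proof
  fix x assume "x \<in> lin f c"
  then have "odd (card {s \<in> c. x \<in> f s})" by (simp add: lin_def)
  then have "{s \<in> c. x \<in> f s} \<noteq> {}" by (intro notI) simp
  then show "x \<in> \<Union> (f ` c)" by auto
qed

lemma lin_cong: "(\<And>s. s \<in> c \<Longrightarrow> f s = g s) \<Longrightarrow> lin f c = lin g c"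
proof -
  assume h: "\<And>s. s \<in> c \<Longrightarrow> f s = g s"
  have "{s \<in> c. x \<in> f s} = {s \<in> c. x \<in> g s}" for x using h by auto
  then show ?thesis by (simp add: lin_def)
qed

lemma lin_zero: "(\<And>s. s \<in> c \<Longrightarrow> f s = {}) \<Longrightarrow> lin f c = {}"
  using lin_sub[of f c] by auto

lemma lin_finite: "finite c \<Longrightarrow> (\<And>s. s \<in> c \<Longrightarrow> finite (f s)) \<Longrightarrow> finite (lin f c)"
  using lin_sub[of f c] by (meson finite_UN_I finite_subset)

lemma lin_insert: "finite c \<Longrightarrow> a \<notin> c \<Longrightarrow> lin f (insert a c) = symd (f a) (lin f c)"
proof -
  assume fc: "finite c" and a: "a \<notin> c"
  have "x \<in> lin f (insert a c) \<longleftrightarrow> x \<in> symd (f a) (lin f c)" for x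
  proof (cases "x \<in> f a")
    case True
    then have "{s \<in> insert a c. x \<in> f s} = insert a {s \<in> c. x \<in> f s}" by auto
    moreover have "card (insert a {s \<in> c. x \<in> f s}) = Suc (card {s \<in> c. x \<in> f s})"
      using fc a by simp
    ultimately show ?thesis using True by (simp add: lin_def)
  next
    case False
    then have "{s \<in> insert a c. x \<in> f s} = {s \<in> c. x \<in> f s}" by auto
    then show ?thesis using False by (simp add: lin_def)
  qed
  then show ?thesis by blast
qed

lemma card_symd_parity:
  assumes "finite A" "finite B"
  shows "card (symd A B) + 2 * card (A \<inter> B) = card A + card B"
proof -
  have "symd A B = (A \<union> B) - (A \<inter> B)" by (auto simp: symd_def)
  moreover have "card ((A \<union> B) - (A \<inter> B)) = card (A \<union> B) - card (A \<inter> B)"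
    by (rule card_Diff_subset) (use assms in auto)
  ultimately have "card (symd A B) = card (A \<union> B) - card (A \<inter> B)" by simp
  moreover have "card (A \<inter> B) \<le> card (A \<union> B)" using assms by (intro card_mono) auto
  moreover have "card (A \<union> B) + card (A \<inter> B) = card A + card B"
    using assms card_Un_Int by metis
  ultimately show ?thesis by simp
qed

lemma lin_symd: "finite a \<Longrightarrow> finite b \<Longrightarrow> lin f (symd a b) = symd (lin f a) (lin f b)"
proof -
  assume fa: "finite a" and fb: "finite b"
  have "x \<in> lin f (symd a b) \<longleftrightarrow> x \<in> symd (lin f a) (lin f b)" for x
  proof -
    let ?A = "{s \<in> a. x \<in> f s}" and ?B = "{s \<in> b. x \<in> f s}"
    have e: "{s \<in> symd a b. x \<in> f s} = symd ?A ?B" by auto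
    have "card (symd ?A ?B) + 2 * card (?A \<inter> ?B) = card ?A + card ?B"
      using fa fb by (intro card_symd_parity) auto
    then have "odd (card (symd ?A ?B)) \<longleftrightarrow> (odd (card ?A) \<noteq> odd (card ?B))"
      by (metis (no_types, lifting) even_add even_mult_iff even_numeral)
    moreover have "x \<in> lin f (symd a b) \<longleftrightarrow> odd (card (symd ?A ?B))"
      by (simp only: lin_mem e)
    moreover have "x \<in> symd (lin f a) (lin f b) \<longleftrightarrow> (odd (card ?A) \<noteq> odd (card ?B))"
      by (simp add: lin_mem)
    ultimately show ?thesis by simp
  qed
  then show ?thesis by blast
qed

lemma lin_comp:
  "finite c \<Longrightarrow> (\<And>s. s \<in> c \<Longrightarrow> finite (g s)) \<Longrightarrow> lin f (lin g c) = lin (\<lambda>s. lin f (g s)) c"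
proof (induction c rule: finite_induct)
  case empty
  then show ?case by simp
next
  case (insert a c)
  have fl: "finite (lin g c)" using insert by (intro lin_finite) auto
  have "lin f (lin g (insert a c)) = lin f (symd (g a) (lin g c))"
    using insert by (simp add: lin_insert)
  also have "\<dots> = symd (lin f (g a)) (lin f (lin g c))"
    using insert fl by (simp add: lin_symd)
  also have "\<dots> = symd (lin f (g a)) (lin (\<lambda>s. lin f (g s)) c)"
    using insert by simp
  also have "\<dots> = lin (\<lambda>s. lin f (g s)) (insert a c)"
    using insert by (simp add: lin_insert)
  finally show ?case .
qed



locale tri =
  fixes S :: "'b set" and g :: "'b \<Rightarrow> 'b set" and r :: "'b \<Rightarrow> nat" and Cr U :: "'b set"
  assumes finS: "finite S"
    and g_sub: "\<And>\<nu>. \<nu> \<in> S \<Longrightarrow> g \<nu> \<subseteq> S"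
    and g_rank: "\<And>\<nu> y. \<nu> \<in> S \<Longrightarrow> y \<in> g \<nu> \<Longrightarrow> y \<noteq> \<nu> \<Longrightarrow> r y < r \<nu>"
    and g_diag: "\<And>\<nu>. \<nu> \<in> S \<Longrightarrow> \<nu> \<in> g \<nu> \<longleftrightarrow> \<nu> \<in> Cr"
    and g_crit: "\<And>\<nu>. \<nu> \<in> Cr \<Longrightarrow> \<nu> \<in> S \<and> g \<nu> - {\<nu>} \<subseteq> U"
    and U_sub: "U \<subseteq> S" "U \<inter> Cr = {}"
    and g_U: "\<And>u. u \<in> U \<Longrightarrow> g u \<subseteq> U"
begin

lemma fin: "c \<subseteq> S \<Longrightarrow> finite c"
  using finS finite_subset by blast

lemma Phi_sub: "c \<subseteq> S \<Longrightarrow> lin g c \<subseteq> S"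
  using lin_sub[of g c] g_sub by blast

lemma pow_sub: "c \<subseteq> S \<Longrightarrow> (lin g ^^ k) c \<subseteq> S"
  by (induction k) (auto dest: Phi_sub)

lemma Phi_symd: "a \<subseteq> S \<Longrightarrow> b \<subseteq> S \<Longrightarrow> lin g (symd a b) = symd (lin g a) (lin g b)"
  by (simp add: lin_symd fin)

lemma pow_symd: "a \<subseteq> S \<Longrightarrow> b \<subseteq> S \<Longrightarrow>
   (lin g ^^ k) (symd a b) = symd ((lin g ^^ k) a) ((lin g ^^ k) b)"
proof (induction k)
  case 0
  then show ?case by simp
next
  case (Suc k)
  then show ?case using pow_sub Phi_symd by simp
qed

lemma fix_zero:
  assumes d: "d \<subseteq> S" and fx: "lin g d = d" and nc: "d \<inter> Cr = {}"
  shows "d = {}"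
proof (rule ccontr)
  assume ne: "d \<noteq> {}"
  have fd: "finite d" using d fin by blast
  obtain \<nu> where \<nu>: "\<nu> \<in> d" "r \<nu> = Max (r ` d)"
    using ne fd by (metis (mono_tags, lifting) Max_in finite_imageI image_iff image_is_empty)
  have "\<nu> \<in> lin g d" using fx \<nu> by simp
  then obtain \<mu> where \<mu>: "\<mu> \<in> d" "\<nu> \<in> g \<mu>" using lin_sub[of g d] by blast
  show False
  proof (cases "\<mu> = \<nu>")
    case True
    then have "\<nu> \<in> Cr" using g_diag[of \<nu>] \<mu> d by auto
    then show False using nc \<nu> by auto
  next
    case False
    then have "r \<nu> < r \<mu>" using g_rank[of \<mu> \<nu>] \<mu> d by auto
    moreover have "r \<mu> \<le> r \<nu>" using \<nu> \<mu> fd by simp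
    ultimately show False by simp
  qed
qed

lemma nil: "c \<subseteq> U \<Longrightarrow> (\<forall>x\<in>c. r x < n) \<Longrightarrow> (lin g ^^ n) c = {}"
proof (induction n arbitrary: c)
  case 0
  then show ?case by auto
next
  case (Suc n)
  have "lin g c \<subseteq> U" using lin_sub[of g c] g_U Suc.prems by blast
  moreover have "\<forall>y\<in>lin g c. r y < n"
  proof
    fix y assume "y \<in> lin g c"
    then obtain x where x: "x \<in> c" "y \<in> g x" using lin_sub[of g c] by blast
    have xS: "x \<in> S" using x Suc.prems U_sub by blast
    have "x \<notin> Cr" using x Suc.prems U_sub by blast
    then have "y \<noteq> x" using g_diag[OF xS] x by auto
    then have "r y < r x" using g_rank[OF xS x(2)] by simp
    then show "r y < n" using Suc.prems x by fastforce
  qed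
  ultimately have "(lin g ^^ n) (lin g c) = {}" using Suc.IH by blast
  then show ?case by (simp add: funpow_Suc_right del: funpow.simps)
qed

definition stab :: "'b set \<Rightarrow> bool" where
  "stab c \<longleftrightarrow> (\<exists>i. (lin g ^^ Suc i) c = (lin g ^^ i) c)"

lemma stab_later: "(lin g ^^ Suc i) c = (lin g ^^ i) c \<Longrightarrow> i \<le> j \<Longrightarrow> (lin g ^^ j) c = (lin g ^^ i) c"
proof (induction j)
  case 0
  then show ?case by simp
next
  case (Suc j)
  show ?case
  proof (cases "i \<le> j")
    case True
    then have "(lin g ^^ j) c = (lin g ^^ i) c" using Suc by simp
    then have "(lin g ^^ Suc j) c = lin g ((lin g ^^ i) c)" by simp
    also have "\<dots> = (lin g ^^ i) c" using Suc.prems(1) by simp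
    finally show ?thesis .
  next
    case False
    then have "i = Suc j" using Suc.prems by simp
    then show ?thesis by simp
  qed
qed

lemma stab_symd: "a \<subseteq> S \<Longrightarrow> b \<subseteq> S \<Longrightarrow> stab a \<Longrightarrow> stab b \<Longrightarrow> stab (symd a b)"
proof -
  assume a: "a \<subseteq> S" and b: "b \<subseteq> S" and sa: "stab a" and sb: "stab b"
  obtain i where i: "(lin g ^^ Suc i) a = (lin g ^^ i) a" using sa stab_def by blast
  obtain j where j: "(lin g ^^ Suc j) b = (lin g ^^ j) b" using sb stab_def by blast
  let ?k = "max i j"
  have "(lin g ^^ Suc ?k) a = (lin g ^^ ?k) a"
    using stab_later[OF i, of "Suc ?k"] stab_later[OF i, of ?k] by simp
  moreover have "(lin g ^^ Suc ?k) b = (lin g ^^ ?k) b"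
    using stab_later[OF j, of "Suc ?k"] stab_later[OF j, of ?k] by simp
  ultimately have "(lin g ^^ Suc ?k) (symd a b) = (lin g ^^ ?k) (symd a b)"
    using pow_symd[OF a b] by metis
  then show ?thesis unfolding stab_def by blast
qed

lemma stab_empty: "stab {}"
  unfolding stab_def by (rule exI[of _ 0]) simp

lemma stab_Phi: "stab (lin g c) \<Longrightarrow> stab c"
proof -
  assume "stab (lin g c)"
  then obtain i where "(lin g ^^ Suc i) (lin g c) = (lin g ^^ i) (lin g c)" using stab_def by blast
  then have "(lin g ^^ Suc (Suc i)) c = (lin g ^^ Suc i) c"
    by (simp only: funpow_Suc_right o_apply)
  then show ?thesis unfolding stab_def by blast
qed

lemma stab_set: "finite c \<Longrightarrow> c \<subseteq> S \<Longrightarrow> (\<forall>x\<in>c. stab {x}) \<Longrightarrow> stab c"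
proof (induction c rule: finite_induct)
  case empty
  show ?case by (rule stab_empty)
next
  case (insert x F)
  have "insert x F = symd {x} F" using insert by auto
  then show ?case using insert stab_symd[of "{x}" F] by auto
qed

lemma stab_single: "\<nu> \<in> S \<Longrightarrow> stab {\<nu>}"
proof (induction "r \<nu>" arbitrary: \<nu> rule: less_induct)
  case less
  show ?case
  proof (cases "\<nu> \<in> Cr")
    case True
    let ?u = "g \<nu> - {\<nu>}"
    have u: "?u \<subseteq> U" using g_crit True by blast
    have ur: "\<forall>x\<in>?u. r x < r \<nu>" using g_rank less.prems by blast
    have uS: "?u \<subseteq> S" using u U_sub by blast
    have "g \<nu> = symd {\<nu>} ?u" using g_diag less.prems True by auto
    then have "(lin g ^^ Suc (r \<nu>)) {\<nu>} = (lin g ^^ (r \<nu>)) (symd {\<nu>} ?u)"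
      by (simp only: funpow_Suc_right o_apply lin_single)
    also have "\<dots> = symd ((lin g ^^ (r \<nu>)) {\<nu>}) ((lin g ^^ (r \<nu>)) ?u)"
      using pow_symd uS less.prems by simp
    also have "(lin g ^^ (r \<nu>)) ?u = {}" using nil[OF u ur] .
    finally have "(lin g ^^ Suc (r \<nu>)) {\<nu>} = (lin g ^^ (r \<nu>)) {\<nu>}" by (auto simp: symd_def)
    then show ?thesis unfolding stab_def by blast
  next
    case False
    have gS: "g \<nu> \<subseteq> S" using g_sub less.prems by blast
    have "\<forall>y\<in>g \<nu>. stab {y}"
    proof
      fix y assume y: "y \<in> g \<nu>"
      then have "y \<noteq> \<nu>" using False g_diag less.prems by auto
      then have "r y < r \<nu>" using g_rank less.prems y by blast
      then show "stab {y}" using less.hyps gS y by blast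
    qed
    then have "stab (g \<nu>)" using stab_set gS fin by blast
    then have "stab (lin g {\<nu>})" by simp
    then show ?thesis by (rule stab_Phi)
  qed
qed

lemma stab_all: "c \<subseteq> S \<Longrightarrow> \<exists>i. (lin g ^^ Suc i) c = (lin g ^^ i) c"
  using stab_set[of c] fin stab_single unfolding stab_def[symmetric] by blast

end



locale MS =
  fixes K :: "'a set set" and W :: "'a step list"
  assumes ms: "morse_seq K W"
begin

lemma cplx_mem: "s \<in> cplx W i \<longleftrightarrow> (\<exists>j<length W. j < i \<and> s \<in> step_set (W!j))"
proof
  assume "s \<in> cplx W i"
  then obtain x where x: "x \<in> set (take i W)" "s \<in> step_set x" unfolding cplx_def by blast
  then obtain j where "j < length (take i W)" "take i W ! j = x" by (auto simp: in_set_conv_nth)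
  then show "\<exists>j<length W. j < i \<and> s \<in> step_set (W!j)" using x by auto
next
  assume "\<exists>j<length W. j < i \<and> s \<in> step_set (W!j)"
  then obtain j where j: "j < length W" "j < i" "s \<in> step_set (W!j)" by blast
  then have "W ! j \<in> set (take i W)" by (auto simp: in_set_conv_nth intro!: exI[of _ j])
  then show "s \<in> cplx W i" unfolding cplx_def using j by blast
qed

lemma K_eq: "K = cplx W (length W)"
  using ms by (simp add: morse_seq_def)

lemma K_mem: "s \<in> K \<longleftrightarrow> (\<exists>j<length W. s \<in> step_set (W!j))"
  using K_eq cplx_mem by auto

lemma finK: "finite K"
proof -
  have "\<And>x. finite (step_set x)" by (case_tac x) auto
  then show ?thesis unfolding K_eq cplx_def by auto
qed

lemma step_prop: "i < length W \<Longrightarrow> simplicial_complex (cplx W (Suc i)) \<and>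
        (case W ! i of
           Fill \<nu> \<Rightarrow> facet (cplx W (Suc i)) \<nu> \<and> \<nu> \<notin> cplx W i
         | Expand \<sigma> \<tau> \<Rightarrow> free_pair (cplx W (Suc i)) \<sigma> \<tau> \<and> \<sigma> \<notin> cplx W i \<and> \<tau> \<notin> cplx W i)"
  using ms unfolding morse_seq_def by blast

lemma sc_i: "i < length W \<Longrightarrow> simplicial_complex (cplx W (Suc i))"
  using ms unfolding morse_seq_def by blast

lemma fp_i: "i < length W \<Longrightarrow> W!i = Expand \<sigma> \<tau> \<Longrightarrow> free_pair (cplx W (Suc i)) \<sigma> \<tau>"
  using step_prop[of i] by simp

lemma step_new: "j < length W \<Longrightarrow> s \<in> step_set (W!j) \<Longrightarrow> s \<notin> cplx W j"
  using step_prop[of j] by (cases "W!j") auto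

lemma step_uniq: "i < length W \<Longrightarrow> j < length W \<Longrightarrow> s \<in> step_set (W!i) \<Longrightarrow> s \<in> step_set (W!j) \<Longrightarrow> i = j"
proof (rule ccontr)
  assume a: "i < length W" "j < length W" "s \<in> step_set (W!i)" "s \<in> step_set (W!j)" "i \<noteq> j"
  show False
  proof (cases "i < j")
    case True
    then have "s \<in> cplx W j" using a cplx_mem by blast
    then show False using step_new a by blast
  next
    case False
    then have "s \<in> cplx W i" using a cplx_mem by (metis linorder_neqE_nat)
    then show False using step_new a by blast
  qed
qed

definition rk :: "'a set \<Rightarrow> nat" where
  "rk s = (THE i. i < length W \<and> s \<in> step_set (W!i))"

lemma rk_eq: "i < length W \<Longrightarrow> s \<in> step_set (W!i) \<Longrightarrow> rk s = i"
  unfolding rk_def by (rule the_equality) (auto dest: step_uniq)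

lemma rk_K: "s \<in> K \<Longrightarrow> rk s < length W \<and> s \<in> step_set (W!(rk s))"
  using K_mem rk_eq by metis

lemma cplx_rk: "i \<le> length W \<Longrightarrow> s \<in> cplx W i \<longleftrightarrow> s \<in> K \<and> rk s < i"
  using cplx_mem K_mem rk_eq by (metis order_less_le_trans)

lemma K_ne: "s \<in> K \<Longrightarrow> finite s \<and> s \<noteq> {}"
proof -
  assume s: "s \<in> K"
  have "Suc (rk s) \<le> length W" using rk_K[OF s] by simp
  then have "s \<in> cplx W (Suc (rk s))" using s cplx_rk by simp
  moreover have "simplicial_complex (cplx W (Suc (rk s)))" using sc_i rk_K s by blast
  ultimately show ?thesis unfolding simplicial_complex_def by blast
qed

lemma face: "s \<in> K \<Longrightarrow> t \<subseteq> s \<Longrightarrow> t \<noteq> {} \<Longrightarrow> t \<in> K \<and> rk t \<le> rk s"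
proof -
  assume s: "s \<in> K" and t: "t \<subseteq> s" "t \<noteq> {}"
  have "Suc (rk s) \<le> length W" using rk_K[OF s] by simp
  then have "s \<in> cplx W (Suc (rk s))" using s cplx_rk by simp
  moreover have "simplicial_complex (cplx W (Suc (rk s)))" using sc_i rk_K s by blast
  ultimately have "t \<in> cplx W (Suc (rk s))" unfolding simplicial_complex_def using t by blast
  then have "t \<in> K \<and> rk t < Suc (rk s)" using cplx_rk \<open>Suc (rk s) \<le> length W\<close> by blast
  then show ?thesis by simp
qed

lemma pair: "i < length W \<Longrightarrow> W!i = Expand \<sigma> \<tau> \<Longrightarrow>
   \<sigma> \<subset> \<tau> \<and> card \<tau> = Suc (card \<sigma>) \<and> \<sigma> \<in> K \<and> \<tau> \<in> K \<and> rk \<sigma> = i \<and> rk \<tau> = i"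
proof -
  assume i: "i < length W" and e: "W!i = Expand \<sigma> \<tau>"
  let ?C = "cplx W (Suc i)"
  have sc: "simplicial_complex ?C" using sc_i[OF i] .
  have fp: "free_pair ?C \<sigma> \<tau>" using fp_i[OF i e] .
  have st: "\<sigma> \<in> step_set (W!i)" "\<tau> \<in> step_set (W!i)" using e by simp_all
  have rks: "rk \<sigma> = i" "rk \<tau> = i" using rk_eq[OF i st(1)] rk_eq[OF i st(2)] by simp_all
  have inK: "\<sigma> \<in> K" "\<tau> \<in> K" unfolding K_mem using i st by blast+
  have sub: "\<sigma> \<subset> \<tau>" using fp unfolding free_pair_def by blast
  have ft: "finite \<tau>" using K_ne inK by blast
  have fs: "finite \<sigma>" using ft sub finite_subset by blast
  have "card \<tau> = Suc (card \<sigma>)"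
  proof (rule ccontr)
    assume nc: "card \<tau> \<noteq> Suc (card \<sigma>)"
    obtain x where x: "x \<in> \<tau>" "x \<notin> \<sigma>" using sub by blast
    let ?\<mu> = "insert x \<sigma>"
    have "?\<mu> \<subseteq> \<tau>" using x sub by blast
    moreover have "\<tau> \<in> ?C" using fp unfolding free_pair_def by blast
    ultimately have "?\<mu> \<in> ?C" using sc unfolding simplicial_complex_def by blast
    then have "?\<mu> = \<sigma> \<or> ?\<mu> = \<tau>" using fp unfolding free_pair_def by blast
    moreover have "?\<mu> \<noteq> \<sigma>" using x by blast
    moreover have "card ?\<mu> = Suc (card \<sigma>)" using fs x by simp
    ultimately show False using nc by auto
  qed
  then show ?thesis using sub rks inK by blast
qed

lemma face_eq: "s \<in> K \<Longrightarrow> t \<subset> s \<Longrightarrow> t \<noteq> {} \<Longrightarrow> rk t = rk s \<Longrightarrow> W!(rk s) = Expand t s"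
proof -
  assume s: "s \<in> K" and t: "t \<subset> s" "t \<noteq> {}" and r: "rk t = rk s"
  have tK: "t \<in> K" using face s t by blast
  have a: "s \<in> step_set (W!(rk s))" "t \<in> step_set (W!(rk s))" using rk_K[OF s] rk_K[OF tK] r by metis+
  show ?thesis
  proof (cases "W!(rk s)")
    case (Fill \<nu>)
    then show ?thesis using a t by auto
  next
    case (Expand \<sigma> \<tau>)
    then have "\<sigma> \<subset> \<tau>" using pair rk_K s by blast
    then show ?thesis using a t Expand by auto
  qed
qed

lemma in_set_step: "x \<in> set W \<Longrightarrow> \<exists>i<length W. W!i = x"
  by (auto simp: in_set_conv_nth)

lemma crit_iff: "\<nu> \<in> crit W \<longleftrightarrow> \<nu> \<in> K \<and> W!(rk \<nu>) = Fill \<nu>"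
proof
  assume "\<nu> \<in> crit W"
  then have "Fill \<nu> \<in> set W" by (simp add: crit_def)
  then obtain i where i: "i < length W" "W!i = Fill \<nu>" using in_set_step by blast
  then have st: "\<nu> \<in> step_set (W!i)" by simp
  have "rk \<nu> = i" using rk_eq[OF i(1) st] .
  moreover have "\<nu> \<in> K" using K_mem i(1) st by blast
  ultimately show "\<nu> \<in> K \<and> W!(rk \<nu>) = Fill \<nu>" using i by simp
next
  assume a: "\<nu> \<in> K \<and> W!(rk \<nu>) = Fill \<nu>"
  have "W!(rk \<nu>) \<in> set W" using rk_K[of \<nu>] a by (intro nth_mem) simp
  then have "Fill \<nu> \<in> set W" using a by simp
  then show "\<nu> \<in> crit W" by (simp add: crit_def)
qed

lemma exp_in: "Expand \<sigma> \<tau> \<in> set W \<longleftrightarrow> \<sigma> \<in> K \<and> W!(rk \<sigma>) = Expand \<sigma> \<tau>"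
proof
  assume "Expand \<sigma> \<tau> \<in> set W"
  then obtain i where i: "i < length W" "W!i = Expand \<sigma> \<tau>" using in_set_step by blast
  then show "\<sigma> \<in> K \<and> W!(rk \<sigma>) = Expand \<sigma> \<tau>" using pair[OF i] by simp
next
  assume "\<sigma> \<in> K \<and> W!(rk \<sigma>) = Expand \<sigma> \<tau>"
  then show "Expand \<sigma> \<tau> \<in> set W" using rk_K by (metis nth_mem)
qed

lemma exp_in2: "Expand \<sigma> \<tau> \<in> set W \<longleftrightarrow> \<tau> \<in> K \<and> W!(rk \<tau>) = Expand \<sigma> \<tau>"
proof
  assume "Expand \<sigma> \<tau> \<in> set W"
  then obtain i where i: "i < length W" "W!i = Expand \<sigma> \<tau>" using in_set_step by blast
  then show "\<tau> \<in> K \<and> W!(rk \<tau>) = Expand \<sigma> \<tau>" using pair[OF i] by simp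
next
  assume "\<tau> \<in> K \<and> W!(rk \<tau>) = Expand \<sigma> \<tau>"
  then show "Expand \<sigma> \<tau> \<in> set W" using rk_K by (metis nth_mem)
qed

lemma exp_pair: "Expand \<sigma> \<tau> \<in> set W \<Longrightarrow>
   \<sigma> \<subset> \<tau> \<and> card \<tau> = Suc (card \<sigma>) \<and> \<sigma> \<in> K \<and> \<tau> \<in> K \<and> rk \<sigma> = rk \<tau>"
proof -
  assume "Expand \<sigma> \<tau> \<in> set W"
  then obtain i where i: "i < length W" "W!i = Expand \<sigma> \<tau>" using in_set_step by blast
  show ?thesis using pair[OF i] by simp
qed

lemma LR_iff: "\<sigma> \<in> lower_reg W \<longleftrightarrow> \<sigma> \<in> K \<and> (\<exists>\<tau>. W!(rk \<sigma>) = Expand \<sigma> \<tau>)"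
  unfolding lower_reg_def using exp_in by blast

lemma UR_iff: "\<tau> \<in> upper_reg W \<longleftrightarrow> \<tau> \<in> K \<and> (\<exists>\<sigma>. W!(rk \<tau>) = Expand \<sigma> \<tau>)"
  unfolding upper_reg_def using exp_in2 by blast

lemma Vf_eq: "Expand \<sigma> \<tau> \<in> set W \<Longrightarrow> Vf W \<sigma> = {\<tau>}"
  unfolding Vf_def using exp_in by auto

lemma Vs_eq: "Expand \<sigma> \<tau> \<in> set W \<Longrightarrow> Vs W \<tau> = {\<sigma>}"
  unfolding Vs_def using exp_in2 by auto

lemma Vf_not: "\<sigma> \<notin> lower_reg W \<Longrightarrow> Vf W \<sigma> = {}"
  unfolding Vf_def lower_reg_def by auto

lemma Vs_not: "\<tau> \<notin> upper_reg W \<Longrightarrow> Vs W \<tau> = {}"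
  unfolding Vs_def upper_reg_def by auto

lemma trich: "s \<in> K \<Longrightarrow> s \<in> crit W \<or> s \<in> lower_reg W \<or> s \<in> upper_reg W"
proof -
  assume s: "s \<in> K"
  then have "s \<in> step_set (W!(rk s))" using rk_K by blast
  then show ?thesis using s crit_iff LR_iff UR_iff by (cases "W!(rk s)") auto
qed

lemma disj1: "s \<in> crit W \<Longrightarrow> s \<notin> lower_reg W"
  using crit_iff LR_iff by auto
lemma disj2: "s \<in> crit W \<Longrightarrow> s \<notin> upper_reg W"
  using crit_iff UR_iff by auto
lemma disj3: "s \<in> lower_reg W \<Longrightarrow> s \<notin> upper_reg W"
proof
  assume "s \<in> lower_reg W" "s \<in> upper_reg W"
  then obtain \<tau> \<sigma> where "W!(rk s) = Expand s \<tau>" "W!(rk s) = Expand \<sigma> s" "s \<in> K"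
    using LR_iff UR_iff by blast
  then have "Expand s s \<in> set W" using exp_in by auto
  then show False using exp_pair by blast
qed

lemma crit_K: "crit W \<subseteq> K" using crit_iff by blast
lemma LR_K: "lower_reg W \<subseteq> K" using LR_iff by blast
lemma UR_K: "upper_reg W \<subseteq> K" using UR_iff by blast

lemma bd_rank: "\<nu> \<in> K \<Longrightarrow> t \<in> bd K \<nu> \<Longrightarrow> t \<in> K \<and> rk t \<le> rk \<nu> \<and> (rk t = rk \<nu> \<longrightarrow> W!(rk \<nu>) = Expand t \<nu>)"
proof -
  assume \<nu>: "\<nu> \<in> K" and t: "t \<in> bd K \<nu>"
  have tK: "t \<in> K" "t \<subset> \<nu>" using t bd_def by auto
  have ne: "t \<noteq> {}" using K_ne tK by blast
  have "t \<in> K \<and> rk t \<le> rk \<nu>" using face[OF \<nu> psubset_imp_subset[OF tK(2)] ne] .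
  moreover have "rk t = rk \<nu> \<longrightarrow> W!(rk \<nu>) = Expand t \<nu>" using face_eq[OF \<nu> tK(2) ne] by blast
  ultimately show ?thesis by blast
qed

lemma cobd_rank: "\<sigma> \<in> K \<Longrightarrow> \<mu> \<in> cobd K \<sigma> \<Longrightarrow> \<mu> \<in> K \<and> rk \<sigma> \<le> rk \<mu> \<and> (rk \<sigma> = rk \<mu> \<longrightarrow> W!(rk \<mu>) = Expand \<sigma> \<mu>)"
proof -
  assume \<sigma>: "\<sigma> \<in> K" and t: "\<mu> \<in> cobd K \<sigma>"
  have tK: "\<mu> \<in> K" "\<sigma> \<subset> \<mu>" using t cobd_def by auto
  have ne: "\<sigma> \<noteq> {}" using K_ne \<sigma> by blast
  have "\<sigma> \<in> K \<and> rk \<sigma> \<le> rk \<mu>" using face[OF tK(1) psubset_imp_subset[OF tK(2)] ne] .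
  moreover have "rk \<sigma> = rk \<mu> \<longrightarrow> W!(rk \<mu>) = Expand \<sigma> \<mu>" using face_eq[OF tK(1) tK(2) ne] by blast
  ultimately show ?thesis using tK by blast
qed

end


lemma lin_remove: "finite c \<Longrightarrow> a \<in> c \<Longrightarrow> lin f c = symd (f a) (lin f (c - {a}))"
  using lin_insert[of "c - {a}" a f] by (simp add: insert_absorb)

lemma symd_bound: "(\<forall>y\<in>A. P y) \<Longrightarrow> (\<forall>y\<in>B. P y) \<Longrightarrow> \<forall>y\<in>symd A B. P y"
  by (auto simp: symd_def)

context MS
begin

definition gF :: "'a set \<Rightarrow> 'a set set" where
  "gF \<nu> = symd (symd {\<nu>} (lin (bd K) (Vf W \<nu>))) (lin (Vf W) (bd K \<nu>))"

definition gC :: "'a set \<Rightarrow> 'a set set" where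
  "gC \<nu> = symd (symd {\<nu>} (lin (cobd K) (Vs W \<nu>))) (lin (Vs W) (cobd K \<nu>))"

lemma flow_eq: "flow K W = lin gF"
  unfolding flow_def gF_def[abs_def] by simp

lemma coflow_eq: "coflow K W = lin gC"
  unfolding coflow_def gC_def[abs_def] by simp

lemma finite_bd: "finite (bd K \<nu>)"
  using finK unfolding bd_def by simp

lemma finite_cobd: "finite (cobd K \<nu>)"
  using finK unfolding cobd_def by simp

lemma linVf_low: "(\<And>t. t \<in> A \<Longrightarrow> rk t < R) \<Longrightarrow> lin (Vf W) A \<subseteq> {y \<in> upper_reg W. rk y < R}"
proof
  fix y assume h: "\<And>t. t \<in> A \<Longrightarrow> rk t < R" and y: "y \<in> lin (Vf W) A"
  then obtain t where t: "t \<in> A" "y \<in> Vf W t" using lin_sub[of "Vf W" A] by blast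
  then have e: "Expand t y \<in> set W" by (simp add: Vf_def)
  then have "rk t = rk y" using exp_pair by blast
  moreover have "y \<in> upper_reg W" using e upper_reg_def by blast
  ultimately show "y \<in> {y \<in> upper_reg W. rk y < R}" using h[OF t(1)] by simp
qed

lemma linVs_high: "(\<And>t. t \<in> A \<Longrightarrow> R < rk t) \<Longrightarrow> lin (Vs W) A \<subseteq> {y \<in> lower_reg W. R < rk y}"
proof
  fix y assume h: "\<And>t. t \<in> A \<Longrightarrow> R < rk t" and y: "y \<in> lin (Vs W) A"
  then obtain t where t: "t \<in> A" "y \<in> Vs W t" using lin_sub[of "Vs W" A] by blast
  then have e: "Expand y t \<in> set W" by (simp add: Vs_def)
  then have "rk t = rk y" using exp_pair by simp
  moreover have "y \<in> lower_reg W" using e lower_reg_def by blast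
  ultimately show "y \<in> {y \<in> lower_reg W. R < rk y}" using h[OF t(1)] by simp
qed

lemma pair_bd: "Expand \<sigma> \<tau> \<in> set W \<Longrightarrow> \<sigma> \<in> bd K \<tau>"
  using exp_pair[of \<sigma> \<tau>] unfolding bd_def by simp

lemma pair_cobd: "Expand \<sigma> \<tau> \<in> set W \<Longrightarrow> \<tau> \<in> cobd K \<sigma>"
  using exp_pair[of \<sigma> \<tau>] unfolding cobd_def by simp

lemma bd_K: "bd K \<nu> \<subseteq> K" unfolding bd_def by blast
lemma cobd_K: "cobd K \<nu> \<subseteq> K" unfolding cobd_def by blast

lemma bd_lt: assumes e: "Expand \<sigma> \<tau> \<in> set W" and t: "t \<in> bd K \<tau>" "t \<noteq> \<sigma>"
  shows "rk t < rk \<tau>"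
proof -
  have \<tau>: "\<tau> \<in> K" "W!(rk \<tau>) = Expand \<sigma> \<tau>" using exp_in2 e by blast+
  have "rk t \<le> rk \<tau> \<and> (rk t = rk \<tau> \<longrightarrow> W!(rk \<tau>) = Expand t \<tau>)" using bd_rank[OF \<tau>(1) t(1)] by blast
  then show ?thesis using \<tau> t by auto
qed

lemma bd_lt_nonUR: assumes \<nu>: "\<nu> \<in> K" "\<nu> \<notin> upper_reg W" and t: "t \<in> bd K \<nu>"
  shows "rk t < rk \<nu>"
proof -
  have "rk t \<le> rk \<nu> \<and> (rk t = rk \<nu> \<longrightarrow> W!(rk \<nu>) = Expand t \<nu>)" using bd_rank[OF \<nu>(1) t] by blast
  then show ?thesis using \<nu> UR_iff by (metis le_neq_implies_less)
qed

lemma cobd_gt: assumes e: "Expand \<sigma> \<tau> \<in> set W" and t: "\<mu> \<in> cobd K \<sigma>" "\<mu> \<noteq> \<tau>"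
  shows "rk \<sigma> < rk \<mu>"
proof -
  have \<sigma>: "\<sigma> \<in> K" "W!(rk \<sigma>) = Expand \<sigma> \<tau>" using exp_in e by blast+
  have a: "\<mu> \<in> K \<and> rk \<sigma> \<le> rk \<mu> \<and> (rk \<sigma> = rk \<mu> \<longrightarrow> W!(rk \<mu>) = Expand \<sigma> \<mu>)" using cobd_rank[OF \<sigma>(1) t(1)] by blast
  show ?thesis
  proof (rule ccontr)
    assume "\<not> rk \<sigma> < rk \<mu>"
    then have "W!(rk \<sigma>) = Expand \<sigma> \<mu>" using a by auto
    then show False using \<sigma> t by simp
  qed
qed

lemma cobd_gt_nonLR: assumes \<nu>: "\<nu> \<in> K" "\<nu> \<notin> lower_reg W" and t: "\<mu> \<in> cobd K \<nu>"
  shows "rk \<nu> < rk \<mu>"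
proof -
  have a: "\<mu> \<in> K \<and> rk \<nu> \<le> rk \<mu> \<and> (rk \<nu> = rk \<mu> \<longrightarrow> W!(rk \<mu>) = Expand \<nu> \<mu>)" using cobd_rank[OF \<nu>(1) t] by blast
  show ?thesis
  proof (rule ccontr)
    assume "\<not> rk \<nu> < rk \<mu>"
    then have "W!(rk \<nu>) = Expand \<nu> \<mu>" using a by auto
    then show False using \<nu> LR_iff by blast
  qed
qed

lemma gF_struct: assumes \<nu>: "\<nu> \<in> K"
  shows "\<exists>X. gF \<nu> = (if \<nu> \<in> crit W then symd {\<nu>} X else X) \<and> (\<forall>y\<in>X. y \<in> K \<and> rk y < rk \<nu>)
     \<and> (\<nu> \<notin> lower_reg W \<longrightarrow> X \<subseteq> upper_reg W)"
proof -
  consider "\<nu> \<in> crit W" | "\<nu> \<in> lower_reg W" | "\<nu> \<in> upper_reg W" using trich \<nu> by blast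
  then show ?thesis
  proof cases
    case 1
    have v: "Vf W \<nu> = {}" using Vf_not disj1 1 by blast
    let ?X = "lin (Vf W) (bd K \<nu>)"
    have "gF \<nu> = symd {\<nu>} ?X" unfolding gF_def v by (auto)
    moreover have "?X \<subseteq> {y \<in> upper_reg W. rk y < rk \<nu>}"
      using linVf_low bd_lt_nonUR \<nu> disj2[OF 1] by blast
    ultimately show ?thesis using 1 UR_K by (intro exI[of _ ?X]) auto
  next
    case 2
    then obtain \<tau> where e0: "W!(rk \<nu>) = Expand \<nu> \<tau>" using LR_iff by blast
    then have e: "Expand \<nu> \<tau> \<in> set W" using exp_in \<nu> by blast
    have v: "Vf W \<nu> = {\<tau>}" using Vf_eq e .
    have s: "\<nu> \<in> bd K \<tau>" using pair_bd e .
    let ?Y = "lin (Vf W) (bd K \<nu>)"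
    let ?X = "symd (bd K \<tau> - {\<nu>}) ?Y"
    have "gF \<nu> = ?X" unfolding gF_def v lin_single using s by auto
    moreover have "\<forall>y\<in>bd K \<tau> - {\<nu>}. y \<in> K \<and> rk y < rk \<nu>"
      using bd_lt[OF e] bd_K exp_pair[OF e] by auto
    moreover have "?Y \<subseteq> {y \<in> upper_reg W. rk y < rk \<nu>}"
      using linVf_low bd_lt_nonUR \<nu> disj3[OF 2] by blast
    moreover have "\<forall>y\<in>?Y. y \<in> K \<and> rk y < rk \<nu>" using \<open>?Y \<subseteq> _\<close> UR_K by blast
    ultimately have "gF \<nu> = ?X" "\<forall>y\<in>?X. y \<in> K \<and> rk y < rk \<nu>" using symd_bound by blast+
    moreover have "\<nu> \<notin> crit W" using 2 disj1 by blast
    ultimately show ?thesis using 2 by (intro exI[of _ ?X]) simp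
  next
    case 3
    then obtain \<sigma> where e0: "W!(rk \<nu>) = Expand \<sigma> \<nu>" using UR_iff by blast
    then have e: "Expand \<sigma> \<nu> \<in> set W" using exp_in2 \<nu> by blast
    have v: "Vf W \<nu> = {}" using Vf_not disj3 3 by blast
    have s: "\<sigma> \<in> bd K \<nu>" using pair_bd e .
    let ?X = "lin (Vf W) (bd K \<nu> - {\<sigma>})"
    have "lin (Vf W) (bd K \<nu>) = symd (Vf W \<sigma>) ?X" using lin_remove[OF finite_bd s] .
    then have "lin (Vf W) (bd K \<nu>) = symd {\<nu>} ?X" using Vf_eq[OF e] by simp
    then have "gF \<nu> = ?X" unfolding gF_def v by auto
    moreover have "?X \<subseteq> {y \<in> upper_reg W. rk y < rk \<nu>}"
      using linVf_low bd_lt[OF e] by blast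
    ultimately show ?thesis using 3 disj2 UR_K by (intro exI[of _ ?X]) auto
  qed
qed

lemma gC_struct: assumes \<nu>: "\<nu> \<in> K"
  shows "\<exists>X. gC \<nu> = (if \<nu> \<in> crit W then symd {\<nu>} X else X) \<and> (\<forall>y\<in>X. y \<in> K \<and> rk \<nu> < rk y)
     \<and> (\<nu> \<notin> upper_reg W \<longrightarrow> X \<subseteq> lower_reg W)"
proof -
  consider "\<nu> \<in> crit W" | "\<nu> \<in> lower_reg W" | "\<nu> \<in> upper_reg W" using trich \<nu> by blast
  then show ?thesis
  proof cases
    case 1
    have v: "Vs W \<nu> = {}" using Vs_not disj2 1 by blast
    let ?X = "lin (Vs W) (cobd K \<nu>)"
    have "gC \<nu> = symd {\<nu>} ?X" unfolding gC_def v by (auto)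
    moreover have "?X \<subseteq> {y \<in> lower_reg W. rk \<nu> < rk y}"
      using linVs_high cobd_gt_nonLR \<nu> disj1[OF 1] by blast
    ultimately show ?thesis using 1 LR_K by (intro exI[of _ ?X]) auto
  next
    case 3
    then obtain \<sigma> where e0: "W!(rk \<nu>) = Expand \<sigma> \<nu>" using UR_iff by blast
    then have e: "Expand \<sigma> \<nu> \<in> set W" using exp_in2 \<nu> by blast
    have v: "Vs W \<nu> = {\<sigma>}" using Vs_eq e .
    have s: "\<nu> \<in> cobd K \<sigma>" using pair_cobd e .
    have rr: "rk \<sigma> = rk \<nu>" using exp_pair[OF e] by simp
    let ?Y = "lin (Vs W) (cobd K \<nu>)"
    let ?X = "symd (cobd K \<sigma> - {\<nu>}) ?Y"
    have "gC \<nu> = ?X" unfolding gC_def v lin_single using s by auto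
    moreover have "\<forall>y\<in>cobd K \<sigma> - {\<nu>}. y \<in> K \<and> rk \<nu> < rk y"
      using cobd_gt[OF e] cobd_K rr by auto
    moreover have "?Y \<subseteq> {y \<in> lower_reg W. rk \<nu> < rk y}"
      using linVs_high cobd_gt_nonLR \<nu> disj3 3 by blast
    moreover have "\<forall>y\<in>?Y. y \<in> K \<and> rk \<nu> < rk y" using \<open>?Y \<subseteq> _\<close> LR_K by blast
    ultimately have "gC \<nu> = ?X" "\<forall>y\<in>?X. y \<in> K \<and> rk \<nu> < rk y" using symd_bound by blast+
    moreover have "\<nu> \<notin> crit W" using 3 disj2 by blast
    ultimately show ?thesis using 3 by (intro exI[of _ ?X]) simp
  next
    case 2
    then obtain \<tau> where e0: "W!(rk \<nu>) = Expand \<nu> \<tau>" using LR_iff by blast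
    then have e: "Expand \<nu> \<tau> \<in> set W" using exp_in \<nu> by blast
    have v: "Vs W \<nu> = {}" using Vs_not disj3 2 by blast
    have s: "\<tau> \<in> cobd K \<nu>" using pair_cobd e .
    let ?X = "lin (Vs W) (cobd K \<nu> - {\<tau>})"
    have "lin (Vs W) (cobd K \<nu>) = symd (Vs W \<tau>) ?X" using lin_remove[OF finite_cobd s] .
    then have "lin (Vs W) (cobd K \<nu>) = symd {\<nu>} ?X" using Vs_eq[OF e] by simp
    then have "gC \<nu> = ?X" unfolding gC_def v by auto
    moreover have "?X \<subseteq> {y \<in> lower_reg W. rk \<nu> < rk y}"
      using linVs_high cobd_gt[OF e] by blast
    ultimately show ?thesis using 2 disj1 LR_K by (intro exI[of _ ?X]) auto
  qed
qed

lemma tri_flow: "tri K gF rk (crit W) (upper_reg W)"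
proof
  show "finite K" by (rule finK)
  show "gF \<nu> \<subseteq> K" if "\<nu> \<in> K" for \<nu>
    using gF_struct[OF that] that by (auto split: if_splits)
  show "rk y < rk \<nu>" if "\<nu> \<in> K" "y \<in> gF \<nu>" "y \<noteq> \<nu>" for \<nu> y
    using gF_struct[OF that(1)] that by (auto split: if_splits)
  show "\<nu> \<in> gF \<nu> \<longleftrightarrow> \<nu> \<in> crit W" if "\<nu> \<in> K" for \<nu>
    using gF_struct[OF that] that by (auto split: if_splits)
  show "\<nu> \<in> K \<and> gF \<nu> - {\<nu>} \<subseteq> upper_reg W" if "\<nu> \<in> crit W" for \<nu>
  proof -
    have "\<nu> \<in> K" using that crit_K by blast
    then show ?thesis using gF_struct[of \<nu>] that disj1[OF that] by auto
  qed
  show "upper_reg W \<subseteq> K" by (rule UR_K)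
  show "upper_reg W \<inter> crit W = {}" using disj2 by blast
  show "gF u \<subseteq> upper_reg W" if "u \<in> upper_reg W" for u
  proof -
    have "u \<in> K" using that UR_K by blast
    moreover have "u \<notin> crit W" "u \<notin> lower_reg W" using that disj2 disj3 by blast+
    ultimately show ?thesis using gF_struct[of u] by auto
  qed
qed

lemma tri_coflow: "tri K gC (\<lambda>s. length W - rk s) (crit W) (lower_reg W)"
proof
  show "finite K" by (rule finK)
  show "gC \<nu> \<subseteq> K" if "\<nu> \<in> K" for \<nu>
    using gC_struct[OF that] that by (auto split: if_splits)
  show "length W - rk y < length W - rk \<nu>" if "\<nu> \<in> K" "y \<in> gC \<nu>" "y \<noteq> \<nu>" for \<nu> y
  proof -
    have "y \<in> K \<and> rk \<nu> < rk y" using gC_struct[OF that(1)] that by (auto split: if_splits)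
    moreover have "rk y < length W" using rk_K[of y] \<open>y \<in> K \<and> rk \<nu> < rk y\<close> by blast
    ultimately show ?thesis by linarith
  qed
  show "\<nu> \<in> gC \<nu> \<longleftrightarrow> \<nu> \<in> crit W" if "\<nu> \<in> K" for \<nu>
    using gC_struct[OF that] that by (auto split: if_splits)
  show "\<nu> \<in> K \<and> gC \<nu> - {\<nu>} \<subseteq> lower_reg W" if "\<nu> \<in> crit W" for \<nu>
  proof -
    have "\<nu> \<in> K" using that crit_K by blast
    then show ?thesis using gC_struct[of \<nu>] that disj2[OF that] by auto
  qed
  show "lower_reg W \<subseteq> K" by (rule LR_K)
  show "lower_reg W \<inter> crit W = {}" using disj1 by blast
  show "gC u \<subseteq> lower_reg W" if "u \<in> lower_reg W" for u
  proof -
    have "u \<in> K" using that LR_K by blast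
    moreover have "u \<notin> crit W" "u \<notin> upper_reg W" using that disj1 disj3 by blast+
    ultimately show ?thesis using gC_struct[of u] by auto
  qed
qed

end


lemma symd_empty_iff: "symd X Y = {} \<longleftrightarrow> X = Y"
  by (auto simp: symd_def)

context MS
begin

lemma rk_n_eq: "s \<in> K \<Longrightarrow> n < length W \<Longrightarrow> rk s = n \<Longrightarrow> s \<in> step_set (W!n)"
  using rk_K by blast

definition cgood :: "nat \<Rightarrow> ('a set \<Rightarrow> 'a set set) \<Rightarrow> bool" where
  "cgood m f \<longleftrightarrow> (\<forall>s. s \<notin> K \<longrightarrow> f s = {}) \<and>
     (\<forall>s\<in>K. m \<le> rk s \<longrightarrow> f s \<subseteq> {\<nu> \<in> crit W. card \<nu> = card s}) \<and>
     (\<forall>\<nu>\<in>crit W. m \<le> rk \<nu> \<longrightarrow> f \<nu> = {\<nu>}) \<and>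
     (\<forall>\<sigma>\<in>lower_reg W. m \<le> rk \<sigma> \<longrightarrow> f \<sigma> = {}) \<and>
     (\<forall>\<sigma>\<in>lower_reg W. m \<le> rk \<sigma> \<longrightarrow> lin f (cobd K \<sigma>) = {})"

lemma cgood_top: "cgood (length W) (\<lambda>_. {})"
proof -
  have "\<not> length W \<le> rk s" if "s \<in> K" for s using rk_K[OF that] by simp
  then show ?thesis unfolding cgood_def using crit_K LR_K by blast
qed

lemma cgood_step:
  assumes n: "n < length W" and g: "cgood (Suc n) f"
  shows "\<exists>f'. cgood n f'"
proof (cases "W!n")
  case (Fill \<nu>)
  have fin: "Fill \<nu> \<in> set W" using n Fill by (metis nth_mem)
  then have c: "\<nu> \<in> crit W" by (simp add: crit_def)
  have \<nu>K: "\<nu> \<in> K" using c crit_K by blast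
  have rn: "rk \<nu> = n" using rk_eq[OF n] Fill by simp
  have only: "s = \<nu>" if "s \<in> K" "rk s = n" for s
    using rk_n_eq[OF that(1) n that(2)] Fill by simp
  let ?f = "f(\<nu> := {\<nu>})"
  have "cgood n ?f"
    unfolding cgood_def
  proof (intro conjI ballI allI impI)
    fix s assume "s \<notin> K" then show "?f s = {}" using g \<nu>K unfolding cgood_def by auto
  next
    fix s assume s: "s \<in> K" "n \<le> rk s"
    show "?f s \<subseteq> {\<nu> \<in> crit W. card \<nu> = card s}"
    proof (cases "s = \<nu>")
      case True then show ?thesis using c by simp
    next
      case False
      then have "Suc n \<le> rk s" using only s by (metis le_antisym not_less_eq_eq)
      then show ?thesis using g s False unfolding cgood_def by auto
    qed
  next
    fix \<mu> assume m: "\<mu> \<in> crit W" "n \<le> rk \<mu>"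
    show "?f \<mu> = {\<mu>}"
    proof (cases "\<mu> = \<nu>")
      case True then show ?thesis by simp
    next
      case False
      then have "Suc n \<le> rk \<mu>" using only m crit_K by (metis le_antisym not_less_eq_eq subsetD)
      then show ?thesis using g m False unfolding cgood_def by auto
    qed
  next
    fix \<sigma> assume s: "\<sigma> \<in> lower_reg W" "n \<le> rk \<sigma>"
    have sK: "\<sigma> \<in> K" using s LR_K by blast
    have ne: "\<sigma> \<noteq> \<nu>" using disj1 c s by blast
    then have sn: "Suc n \<le> rk \<sigma>" using only s sK by (metis le_antisym not_less_eq_eq)
    show "?f \<sigma> = {}" using g s sn ne unfolding cgood_def by auto
  next
    fix \<sigma> assume s: "\<sigma> \<in> lower_reg W" "n \<le> rk \<sigma>"
    have sK: "\<sigma> \<in> K" using s LR_K by blast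
    have ne: "\<sigma> \<noteq> \<nu>" using disj1 c s by blast
    then have sn: "Suc n \<le> rk \<sigma>" using only s sK by (metis le_antisym not_less_eq_eq)
    have "lin ?f (cobd K \<sigma>) = lin f (cobd K \<sigma>)"
    proof (rule lin_cong)
      fix \<mu> assume "\<mu> \<in> cobd K \<sigma>"
      then have "rk \<sigma> \<le> rk \<mu>" using cobd_rank[OF sK] by blast
      then have "\<mu> \<noteq> \<nu>" using sn rn by auto
      then show "?f \<mu> = f \<mu>" by simp
    qed
    then show "lin ?f (cobd K \<sigma>) = {}" using g s sn ne unfolding cgood_def by auto
  qed
  then show ?thesis by blast
next
  case (Expand \<sigma> \<tau>)
  have e: "Expand \<sigma> \<tau> \<in> set W" using n Expand by (metis nth_mem)
  have pr: "\<sigma> \<subset> \<tau>" "card \<tau> = Suc (card \<sigma>)" "\<sigma> \<in> K" "\<tau> \<in> K" "rk \<sigma> = n" "rk \<tau> = n"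
    using pair[OF n Expand] by auto
  have sL: "\<sigma> \<in> lower_reg W" using e lower_reg_def by blast
  have tU: "\<tau> \<in> upper_reg W" using e upper_reg_def by blast
  have only: "s = \<sigma> \<or> s = \<tau>" if "s \<in> K" "rk s = n" for s
    using rk_n_eq[OF that(1) n that(2)] Expand by simp
  have st: "\<sigma> \<noteq> \<tau>" using pr by blast
  let ?R = "cobd K \<sigma> - {\<tau>}"
  have R: "\<mu> \<in> K \<and> Suc n \<le> rk \<mu>" if "\<mu> \<in> ?R" for \<mu>
    using cobd_gt[OF e, of \<mu>] that cobd_K pr by auto
  have Rc: "card \<mu> = card \<tau>" if "\<mu> \<in> ?R" for \<mu>
    using that pr unfolding cobd_def by auto
  let ?f = "f(\<sigma> := {}, \<tau> := lin f ?R)"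
  have fR: "lin ?f ?R = lin f ?R"
  proof (rule lin_cong)
    fix \<mu> assume m: "\<mu> \<in> ?R"
    then have "Suc n \<le> rk \<mu>" using R by blast
    then have "\<mu> \<noteq> \<sigma>" "\<mu> \<noteq> \<tau>" using pr by auto
    then show "?f \<mu> = f \<mu>" by simp
  qed
  have "cgood n ?f"
    unfolding cgood_def
  proof (intro conjI ballI allI impI)
    fix s assume "s \<notin> K" then show "?f s = {}" using g pr unfolding cgood_def by auto
  next
    fix s assume s: "s \<in> K" "n \<le> rk s"
    show "?f s \<subseteq> {\<nu> \<in> crit W. card \<nu> = card s}"
    proof (cases "s = \<sigma> \<or> s = \<tau>")
      case True
      show ?thesis
      proof (cases "s = \<tau>")
        case True
        have "lin f ?R \<subseteq> \<Union> (f ` ?R)" by (rule lin_sub)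
        also have "\<dots> \<subseteq> {\<nu> \<in> crit W. card \<nu> = card \<tau>}"
          using g R Rc unfolding cgood_def by fastforce
        finally show ?thesis using True by simp
      next
        case False
        then show ?thesis using \<open>s = \<sigma> \<or> s = \<tau>\<close> st by simp
      qed
    next
      case False
      then have "Suc n \<le> rk s" using only s by (metis le_antisym not_less_eq_eq)
      then show ?thesis using g s False unfolding cgood_def by auto
    qed
  next
    fix \<mu> assume m: "\<mu> \<in> crit W" "n \<le> rk \<mu>"
    have "\<mu> \<noteq> \<sigma>" "\<mu> \<noteq> \<tau>" using m sL tU disj1 disj2 by blast+
    moreover then have "Suc n \<le> rk \<mu>" using only m crit_K by (metis le_antisym not_less_eq_eq subsetD)
    ultimately show "?f \<mu> = {\<mu>}" using g m unfolding cgood_def by auto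
  next
    fix \<sigma>' assume s: "\<sigma>' \<in> lower_reg W" "n \<le> rk \<sigma>'"
    have sK: "\<sigma>' \<in> K" using s LR_K by blast
    show "?f \<sigma>' = {}"
    proof (cases "\<sigma>' = \<sigma>")
      case True then show ?thesis using st by simp
    next
      case False
      have "\<sigma>' \<noteq> \<tau>" using s tU disj3 by blast
      then have sn: "Suc n \<le> rk \<sigma>'" using only s sK False by (metis le_antisym not_less_eq_eq)
      then show ?thesis using g s False \<open>\<sigma>' \<noteq> \<tau>\<close> unfolding cgood_def by auto
    qed
  next
    fix \<sigma>' assume s: "\<sigma>' \<in> lower_reg W" "n \<le> rk \<sigma>'"
    have sK: "\<sigma>' \<in> K" using s LR_K by blast
    show "lin ?f (cobd K \<sigma>') = {}"
    proof (cases "\<sigma>' = \<sigma>")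
      case True
      have tc: "\<tau> \<in> cobd K \<sigma>" using pair_cobd e .
      have "lin ?f (cobd K \<sigma>) = symd (?f \<tau>) (lin ?f ?R)"
        using lin_remove[OF finite_cobd tc] .
      also have "\<dots> = {}" using fR by (simp add: symd_empty_iff)
      finally show ?thesis using True by simp
    next
      case False
      have "\<sigma>' \<noteq> \<tau>" using s tU disj3 by blast
      then have sn: "Suc n \<le> rk \<sigma>'" using only s sK False by (metis le_antisym not_less_eq_eq)
      have "lin ?f (cobd K \<sigma>') = lin f (cobd K \<sigma>')"
      proof (rule lin_cong)
        fix \<mu> assume "\<mu> \<in> cobd K \<sigma>'"
        then have "rk \<sigma>' \<le> rk \<mu>" using cobd_rank[OF sK] by blast
        then have "\<mu> \<noteq> \<sigma>" "\<mu> \<noteq> \<tau>" using sn pr by auto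
        then show "?f \<mu> = f \<mu>" by simp
      qed
      then show ?thesis using g s sn False \<open>\<sigma>' \<noteq> \<tau>\<close> unfolding cgood_def by auto
    qed
  qed
  then show ?thesis by blast
qed

lemma cgood_ex: "m \<le> length W \<Longrightarrow> \<exists>f. cgood m f"
proof (induction m rule: inc_induct)
  case base
  then show ?case using cgood_top by blast
next
  case (step n)
  then show ?case using cgood_step by blast
qed

lemma coref_ex: "\<exists>f. is_coref_map K W f"
proof -
  obtain f where "cgood 0 f" using cgood_ex by blast
  then have "is_coref_map K W f" unfolding cgood_def is_coref_map_def by auto
  then show ?thesis by blast
qed

lemma coref_uniq:
  assumes f: "is_coref_map K W f" and g: "is_coref_map K W g"
  shows "f = g"
proof -
  have main: "\<forall>s. s \<in> K \<longrightarrow> length W - rk s = k \<longrightarrow> f s = g s" for k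
  proof (induction k rule: less_induct)
    case (less k)
    show ?case
    proof (intro allI impI)
      fix s assume s: "s \<in> K" "length W - rk s = k"
      consider "s \<in> crit W" | "s \<in> lower_reg W" | "s \<in> upper_reg W" using trich s by blast
      then show "f s = g s"
      proof cases
        case 1 then show ?thesis using f g unfolding is_coref_map_def by auto
      next
        case 2 then show ?thesis using f g unfolding is_coref_map_def by auto
      next
        case 3
        then obtain \<sigma> where e0: "W!(rk s) = Expand \<sigma> s" using UR_iff by blast
        then have e: "Expand \<sigma> s \<in> set W" using exp_in2 s by blast
        have sL: "\<sigma> \<in> lower_reg W" using e lower_reg_def by blast
        have sc: "s \<in> cobd K \<sigma>" using pair_cobd e .
        have rr: "rk \<sigma> = rk s" using exp_pair[OF e] by simp
        let ?R = "cobd K \<sigma> - {s}"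
        have "lin f (cobd K \<sigma>) = {}" using f sL unfolding is_coref_map_def by blast
        then have "symd (f s) (lin f ?R) = {}" using lin_remove[OF finite_cobd sc, of f] by simp
        then have ff: "f s = lin f ?R" by (simp add: symd_empty_iff)
        have "lin g (cobd K \<sigma>) = {}" using g sL unfolding is_coref_map_def by blast
        then have "symd (g s) (lin g ?R) = {}" using lin_remove[OF finite_cobd sc, of g] by simp
        then have gg: "g s = lin g ?R" by (simp add: symd_empty_iff)
        have "lin f ?R = lin g ?R"
        proof (rule lin_cong)
          fix \<mu> assume m: "\<mu> \<in> ?R"
          have "rk \<sigma> < rk \<mu>" using cobd_gt[OF e] m by blast
          moreover have mK: "\<mu> \<in> K" using m cobd_K by blast
          ultimately have "length W - rk \<mu> < k" using rk_K[OF mK] rk_K[OF s(1)] s(2) rr by linarith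
          then show "f \<mu> = g \<mu>" using less mK by blast
        qed
        then show ?thesis using ff gg by simp
      qed
    qed
  qed
  show ?thesis
  proof
    fix s show "f s = g s"
    proof (cases "s \<in> K")
      case True then show ?thesis using main by blast
    next
      case False then show ?thesis using f g unfolding is_coref_map_def by auto
    qed
  qed
qed

lemma coref_prop: "is_coref_map K W (coref_map K W)"
proof -
  obtain f where f: "is_coref_map K W f" using coref_ex by blast
  show ?thesis unfolding coref_map_def by (rule theI[of _ f]) (use f coref_uniq in auto)
qed

end


context MS
begin

definition rgood :: "nat \<Rightarrow> ('a set \<Rightarrow> 'a set set) \<Rightarrow> bool" where
  "rgood m f \<longleftrightarrow> (\<forall>s. s \<notin> K \<longrightarrow> f s = {}) \<and>
     (\<forall>s\<in>K. rk s < m \<longrightarrow> f s \<subseteq> {\<nu> \<in> crit W. card \<nu> = card s}) \<and>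
     (\<forall>\<nu>\<in>crit W. rk \<nu> < m \<longrightarrow> f \<nu> = {\<nu>}) \<and>
     (\<forall>\<tau>\<in>upper_reg W. rk \<tau> < m \<longrightarrow> f \<tau> = {}) \<and>
     (\<forall>\<tau>\<in>upper_reg W. rk \<tau> < m \<longrightarrow> lin f (bd K \<tau>) = {})"

lemma rgood_bot: "rgood 0 (\<lambda>_. {})"
  unfolding rgood_def by simp

lemma rgood_step:
  assumes n: "n < length W" and g: "rgood n f"
  shows "\<exists>f'. rgood (Suc n) f'"
proof (cases "W!n")
  case (Fill \<nu>)
  have fin: "Fill \<nu> \<in> set W" using n Fill by (metis nth_mem)
  then have c: "\<nu> \<in> crit W" by (simp add: crit_def)
  have \<nu>K: "\<nu> \<in> K" using c crit_K by blast
  have rn: "rk \<nu> = n" using rk_eq[OF n] Fill by simp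
  have only: "s = \<nu>" if "s \<in> K" "rk s = n" for s
    using rk_n_eq[OF that(1) n that(2)] Fill by simp
  let ?f = "f(\<nu> := {\<nu>})"
  have "rgood (Suc n) ?f"
    unfolding rgood_def
  proof (intro conjI ballI allI impI)
    fix s assume "s \<notin> K" then show "?f s = {}" using g \<nu>K unfolding rgood_def by auto
  next
    fix s assume s: "s \<in> K" "rk s < Suc n"
    show "?f s \<subseteq> {\<nu> \<in> crit W. card \<nu> = card s}"
    proof (cases "s = \<nu>")
      case True then show ?thesis using c by simp
    next
      case False
      then have "rk s < n" using only s by (metis less_antisym)
      then show ?thesis using g s False unfolding rgood_def by auto
    qed
  next
    fix \<mu> assume m: "\<mu> \<in> crit W" "rk \<mu> < Suc n"
    show "?f \<mu> = {\<mu>}"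
    proof (cases "\<mu> = \<nu>")
      case True then show ?thesis by simp
    next
      case False
      then have "rk \<mu> < n" using only m crit_K by (metis less_antisym subsetD)
      then show ?thesis using g m False unfolding rgood_def by auto
    qed
  next
    fix \<tau> assume s: "\<tau> \<in> upper_reg W" "rk \<tau> < Suc n"
    have sK: "\<tau> \<in> K" using s UR_K by blast
    have ne: "\<tau> \<noteq> \<nu>" using disj2 c s by blast
    then have sn: "rk \<tau> < n" using only s sK by (metis less_antisym)
    show "?f \<tau> = {}" using g s sn ne unfolding rgood_def by auto
  next
    fix \<tau> assume s: "\<tau> \<in> upper_reg W" "rk \<tau> < Suc n"
    have sK: "\<tau> \<in> K" using s UR_K by blast
    have ne: "\<tau> \<noteq> \<nu>" using disj2 c s by blast
    then have sn: "rk \<tau> < n" using only s sK by (metis less_antisym)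
    have "lin ?f (bd K \<tau>) = lin f (bd K \<tau>)"
    proof (rule lin_cong)
      fix t assume "t \<in> bd K \<tau>"
      then have "rk t \<le> rk \<tau>" using bd_rank[OF sK] by blast
      then have "t \<noteq> \<nu>" using sn rn by auto
      then show "?f t = f t" by simp
    qed
    then show "lin ?f (bd K \<tau>) = {}" using g s sn unfolding rgood_def by auto
  qed
  then show ?thesis by blast
next
  case (Expand \<sigma> \<tau>)
  have e: "Expand \<sigma> \<tau> \<in> set W" using n Expand by (metis nth_mem)
  have pr: "\<sigma> \<subset> \<tau>" "card \<tau> = Suc (card \<sigma>)" "\<sigma> \<in> K" "\<tau> \<in> K" "rk \<sigma> = n" "rk \<tau> = n"
    using pair[OF n Expand] by auto
  have sL: "\<sigma> \<in> lower_reg W" using e lower_reg_def by blast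
  have tU: "\<tau> \<in> upper_reg W" using e upper_reg_def by blast
  have only: "s = \<sigma> \<or> s = \<tau>" if "s \<in> K" "rk s = n" for s
    using rk_n_eq[OF that(1) n that(2)] Expand by simp
  have st: "\<sigma> \<noteq> \<tau>" using pr by blast
  let ?R = "bd K \<tau> - {\<sigma>}"
  have R: "t \<in> K \<and> rk t < n" if "t \<in> ?R" for t
    using bd_lt[OF e, of t] that bd_K pr by auto
  have Rc: "card t = card \<sigma>" if "t \<in> ?R" for t
    using that pr unfolding bd_def by auto
  let ?f = "f(\<tau> := {}, \<sigma> := lin f ?R)"
  have fR: "lin ?f ?R = lin f ?R"
  proof (rule lin_cong)
    fix t assume m: "t \<in> ?R"
    then have "rk t < n" using R by blast
    then have "t \<noteq> \<sigma>" "t \<noteq> \<tau>" using pr by auto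
    then show "?f t = f t" by simp
  qed
  have "rgood (Suc n) ?f"
    unfolding rgood_def
  proof (intro conjI ballI allI impI)
    fix s assume "s \<notin> K" then show "?f s = {}" using g pr unfolding rgood_def by auto
  next
    fix s assume s: "s \<in> K" "rk s < Suc n"
    show "?f s \<subseteq> {\<nu> \<in> crit W. card \<nu> = card s}"
    proof (cases "s = \<sigma> \<or> s = \<tau>")
      case True
      show ?thesis
      proof (cases "s = \<sigma>")
        case True
        have "lin f ?R \<subseteq> \<Union> (f ` ?R)" by (rule lin_sub)
        also have "\<dots> \<subseteq> {\<nu> \<in> crit W. card \<nu> = card \<sigma>}"
          using g R Rc unfolding rgood_def by fastforce
        finally show ?thesis using True by simp
      next
        case False
        then show ?thesis using \<open>s = \<sigma> \<or> s = \<tau>\<close> st by simp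
      qed
    next
      case False
      then have "rk s < n" using only s by (metis less_antisym)
      then show ?thesis using g s False unfolding rgood_def by auto
    qed
  next
    fix \<mu> assume m: "\<mu> \<in> crit W" "rk \<mu> < Suc n"
    have "\<mu> \<noteq> \<sigma>" "\<mu> \<noteq> \<tau>" using m sL tU disj1 disj2 by blast+
    moreover then have "rk \<mu> < n" using only m crit_K by (metis less_antisym subsetD)
    ultimately show "?f \<mu> = {\<mu>}" using g m unfolding rgood_def by auto
  next
    fix \<tau>' assume s: "\<tau>' \<in> upper_reg W" "rk \<tau>' < Suc n"
    have sK: "\<tau>' \<in> K" using s UR_K by blast
    show "?f \<tau>' = {}"
    proof (cases "\<tau>' = \<tau>")
      case True then show ?thesis using st by simp
    next
      case False
      have "\<tau>' \<noteq> \<sigma>" using s sL disj3 by blast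
      then have sn: "rk \<tau>' < n" using only s sK False by (metis less_antisym)
      then show ?thesis using g s False \<open>\<tau>' \<noteq> \<sigma>\<close> unfolding rgood_def by auto
    qed
  next
    fix \<tau>' assume s: "\<tau>' \<in> upper_reg W" "rk \<tau>' < Suc n"
    have sK: "\<tau>' \<in> K" using s UR_K by blast
    show "lin ?f (bd K \<tau>') = {}"
    proof (cases "\<tau>' = \<tau>")
      case True
      have tc: "\<sigma> \<in> bd K \<tau>" using pair_bd e .
      have "lin ?f (bd K \<tau>) = symd (?f \<sigma>) (lin ?f ?R)"
        using lin_remove[OF finite_bd tc] .
      also have "\<dots> = {}" using fR by (simp add: symd_empty_iff)
      finally show ?thesis using True by simp
    next
      case False
      have "\<tau>' \<noteq> \<sigma>" using s sL disj3 by blast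
      then have sn: "rk \<tau>' < n" using only s sK False by (metis less_antisym)
      have "lin ?f (bd K \<tau>') = lin f (bd K \<tau>')"
      proof (rule lin_cong)
        fix t assume "t \<in> bd K \<tau>'"
        then have "rk t \<le> rk \<tau>'" using bd_rank[OF sK] by blast
        then have "t \<noteq> \<sigma>" "t \<noteq> \<tau>" using sn pr by auto
        then show "?f t = f t" by simp
      qed
      then show ?thesis using g s sn unfolding rgood_def by auto
    qed
  qed
  then show ?thesis by blast
qed

lemma rgood_ex: "m \<le> length W \<Longrightarrow> \<exists>f. rgood m f"
proof (induction m)
  case 0
  then show ?case using rgood_bot by blast
next
  case (Suc m)
  then obtain f where f: "rgood m f" by auto
  have "m < length W" using Suc.prems by simp
  then show ?case using rgood_step f by blast
qed

lemma ref_ex: "\<exists>f. is_ref_map K W f"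
proof -
  obtain f where f: "rgood (length W) f" using rgood_ex by blast
  have lt: "rk s < length W" if "s \<in> K" for s using rk_K that by blast
  note fd = f[unfolded rgood_def]
  have r1: "\<forall>s. s \<notin> K \<longrightarrow> f s = {}"
    using fd by (rule conjunct1)
  have r2: "\<forall>s\<in>K. rk s < length W \<longrightarrow> f s \<subseteq> {\<nu> \<in> crit W. card \<nu> = card s}"
    using conjunct2[OF fd] by (rule conjunct1)
  have r3: "\<forall>\<nu>\<in>crit W. rk \<nu> < length W \<longrightarrow> f \<nu> = {\<nu>}"
    using conjunct2[OF conjunct2[OF fd]] by (rule conjunct1)
  have r4: "\<forall>\<tau>\<in>upper_reg W. rk \<tau> < length W \<longrightarrow> f \<tau> = {}"
    using conjunct2[OF conjunct2[OF conjunct2[OF fd]]] by (rule conjunct1)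
  have r5: "\<forall>\<tau>\<in>upper_reg W. rk \<tau> < length W \<longrightarrow> lin f (bd K \<tau>) = {}"
    using conjunct2[OF conjunct2[OF conjunct2[OF fd]]] by (rule conjunct2)
  have "is_ref_map K W f" unfolding is_ref_map_def
  proof (intro conjI ballI allI impI)
    show "f s = {}" if "s \<notin> K" for s using r1 that by blast
    show "f s \<subseteq> {\<nu> \<in> crit W. card \<nu> = card s}" if "s \<in> K" for s using r2 lt[OF that] that by simp
    show "f \<nu> = {\<nu>}" if "\<nu> \<in> crit W" for \<nu> using r3 lt[of \<nu>] crit_K that by auto
    show "f \<tau> = {}" if "\<tau> \<in> upper_reg W" for \<tau> using r4 lt[of \<tau>] UR_K that by auto
    show "lin f (bd K \<tau>) = {}" if "\<tau> \<in> upper_reg W" for \<tau> using r5 lt[of \<tau>] UR_K that by auto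
  qed
  then show ?thesis by blast
qed

lemma ref_uniq:
  assumes f: "is_ref_map K W f" and g: "is_ref_map K W g"
  shows "f = g"
proof -
  have main: "\<forall>s. s \<in> K \<longrightarrow> rk s = k \<longrightarrow> f s = g s" for k
  proof (induction k rule: less_induct)
    case (less k)
    show ?case
    proof (intro allI impI)
      fix s assume s: "s \<in> K" "rk s = k"
      consider "s \<in> crit W" | "s \<in> lower_reg W" | "s \<in> upper_reg W" using trich s by blast
      then show "f s = g s"
      proof cases
        case 1 then show ?thesis using f g unfolding is_ref_map_def by auto
      next
        case 3 then show ?thesis using f g unfolding is_ref_map_def by auto
      next
        case 2
        then obtain \<tau> where e0: "W!(rk s) = Expand s \<tau>" using LR_iff by blast
        then have e: "Expand s \<tau> \<in> set W" using exp_in s by blast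
        have tU: "\<tau> \<in> upper_reg W" using e upper_reg_def by blast
        have sc: "s \<in> bd K \<tau>" using pair_bd e .
        have rr: "rk s = rk \<tau>" using exp_pair[OF e] by simp
        let ?R = "bd K \<tau> - {s}"
        have "lin f (bd K \<tau>) = {}" using f tU unfolding is_ref_map_def by blast
        then have "symd (f s) (lin f ?R) = {}" using lin_remove[OF finite_bd sc, of f] by simp
        then have ff: "f s = lin f ?R" by (simp add: symd_empty_iff)
        have "lin g (bd K \<tau>) = {}" using g tU unfolding is_ref_map_def by blast
        then have "symd (g s) (lin g ?R) = {}" using lin_remove[OF finite_bd sc, of g] by simp
        then have gg: "g s = lin g ?R" by (simp add: symd_empty_iff)
        have "lin f ?R = lin g ?R"
        proof (rule lin_cong)
          fix t assume m: "t \<in> ?R"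
          have "rk t < rk \<tau>" using bd_lt[OF e] m by blast
          moreover have mK: "t \<in> K" using m bd_K by blast
          ultimately have "rk t < k" using s(2) rr by simp
          then show "f t = g t" using less.IH mK by blast
        qed
        then show ?thesis using ff gg by simp
      qed
    qed
  qed
  show ?thesis
  proof
    fix s show "f s = g s"
    proof (cases "s \<in> K")
      case True then show ?thesis using main by blast
    next
      case False then show ?thesis using f g unfolding is_ref_map_def by auto
    qed
  qed
qed

lemma ref_prop: "is_ref_map K W (ref_map K W)"
proof -
  obtain f where f: "is_ref_map K W f" using ref_ex by blast
  show ?thesis unfolding ref_map_def by (rule theI[of _ f]) (use f ref_uniq in auto)
qed

end


lemma symd_finite: "finite A \<Longrightarrow> finite B \<Longrightarrow> finite (symd A B)"
  by (simp add: symd_def)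

lemma lin_single_set: "lin f {a} = f a" by simp

context MS
begin

lemma Cf1: "s \<notin> K \<Longrightarrow> coref_map K W s = {}"
  using conjunct1[OF coref_prop[unfolded is_coref_map_def]] by simp
lemma Cf2: "s \<in> K \<Longrightarrow> coref_map K W s \<subseteq> {\<nu> \<in> crit W. card \<nu> = card s}"
  using conjunct1[OF conjunct2[OF coref_prop[unfolded is_coref_map_def]]] by simp
lemma Cf3: "\<nu> \<in> crit W \<Longrightarrow> coref_map K W \<nu> = {\<nu>}"
  using conjunct1[OF conjunct2[OF conjunct2[OF coref_prop[unfolded is_coref_map_def]]]] by simp
lemma Cf4: "s \<in> lower_reg W \<Longrightarrow> coref_map K W s = {}"
  using conjunct2[OF conjunct2[OF conjunct2[OF coref_prop[unfolded is_coref_map_def]]]] by simp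
lemma Cf5: "s \<in> lower_reg W \<Longrightarrow> lin (coref_map K W) (cobd K s) = {}"
  using conjunct2[OF conjunct2[OF conjunct2[OF coref_prop[unfolded is_coref_map_def]]]] by simp

lemma Rf1: "s \<notin> K \<Longrightarrow> ref_map K W s = {}"
  using conjunct1[OF ref_prop[unfolded is_ref_map_def]] by simp
lemma Rf2: "s \<in> K \<Longrightarrow> ref_map K W s \<subseteq> {\<nu> \<in> crit W. card \<nu> = card s}"
  using conjunct1[OF conjunct2[OF ref_prop[unfolded is_ref_map_def]]] by simp
lemma Rf3: "\<nu> \<in> crit W \<Longrightarrow> ref_map K W \<nu> = {\<nu>}"
  using conjunct1[OF conjunct2[OF conjunct2[OF ref_prop[unfolded is_ref_map_def]]]] by simp
lemma Rf4: "s \<in> upper_reg W \<Longrightarrow> ref_map K W s = {}"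
  using conjunct2[OF conjunct2[OF conjunct2[OF ref_prop[unfolded is_ref_map_def]]]] by simp
lemma Rf5: "s \<in> upper_reg W \<Longrightarrow> lin (ref_map K W) (bd K s) = {}"
  using conjunct2[OF conjunct2[OF conjunct2[OF ref_prop[unfolded is_ref_map_def]]]] by simp

lemma transp:
  fixes g :: "'a set \<Rightarrow> 'a set set" and h :: "'a set \<Rightarrow> 'a set set"
  shows "x \<in> lin g {\<nu> \<in> K. \<kappa> \<in> h \<nu>} \<longleftrightarrow> \<kappa> \<in> lin h {\<nu> \<in> K. x \<in> g \<nu>}"
proof -
  have "{s \<in> {\<nu> \<in> K. \<kappa> \<in> h \<nu>}. x \<in> g s} = {s \<in> {\<nu> \<in> K. x \<in> g \<nu>}. \<kappa> \<in> h s}" by auto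
  then show ?thesis by (simp add: lin_mem)
qed

lemma flow_ext: "flow K W (ext_ref K W \<kappa>) = ext_ref K W \<kappa>"
proof -
  let ?C = "coref_map K W"
  have "x \<in> lin gF (ext_ref K W \<kappa>) \<longleftrightarrow> x \<in> ext_ref K W \<kappa>" for x
  proof -
    let ?T = "{\<nu> \<in> K. x \<in> gF \<nu>}"
    let ?A = "{\<nu> \<in> K. x \<in> lin (bd K) (Vf W \<nu>)}"
    let ?B = "{\<nu> \<in> K. x \<in> lin (Vf W) (bd K \<nu>)}"
    have l1: "x \<in> lin gF (ext_ref K W \<kappa>) \<longleftrightarrow> \<kappa> \<in> lin ?C ?T"
      unfolding ext_ref_def by (rule transp)
    have T: "?T = symd (symd ({x} \<inter> K) ?A) ?B"
    proof (rule set_eqI)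
      fix \<nu>
      show "\<nu> \<in> ?T \<longleftrightarrow> \<nu> \<in> symd (symd ({x} \<inter> K) ?A) ?B"
      proof (cases "\<nu> \<in> K")
        case True then show ?thesis unfolding gF_def symd_mem by auto
      next
        case False then show ?thesis by simp
      qed
    qed
    have fA: "finite ?A" "finite ?B" "finite ({x} \<inter> K)" using finK by auto
    have "lin ?C ?T = symd (symd (lin ?C ({x} \<inter> K)) (lin ?C ?A)) (lin ?C ?B)"
      unfolding T using fA by (simp add: lin_symd symd_finite)
    moreover have "lin ?C ({x} \<inter> K) = ?C x"
      by (cases "x \<in> K") (auto simp: Cf1)
    moreover have "lin ?C ?A = {}"
    proof (rule lin_zero)
      fix \<nu> assume "\<nu> \<in> ?A"
      then have "Vf W \<nu> \<noteq> {}" by auto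
      then have "\<nu> \<in> lower_reg W" using Vf_not by blast
      then show "?C \<nu> = {}" using Cf4 by blast
    qed
    moreover have "lin ?C ?B = {}"
    proof (cases "x \<in> upper_reg W")
      case True
      then obtain \<sigma> where e: "Expand \<sigma> x \<in> set W" unfolding upper_reg_def by blast
      have sL: "\<sigma> \<in> lower_reg W" using e lower_reg_def by blast
      have pr: "\<sigma> \<in> K" using exp_pair[OF e] by simp
      have vx: "x \<in> Vf W t \<longleftrightarrow> t = \<sigma>" for t
      proof -
        have "x \<in> Vf W t \<longleftrightarrow> t \<in> Vs W x" by (simp add: Vf_def Vs_def)
        then show ?thesis using Vs_eq[OF e] by simp
      qed
      have "?B = cobd K \<sigma>"
      proof (intro set_eqI iffI)
        fix \<nu> assume "\<nu> \<in> ?B"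
        then have \<nu>: "\<nu> \<in> K" "odd (card {t \<in> bd K \<nu>. x \<in> Vf W t})" by (auto simp: lin_mem)
        then have "{t \<in> bd K \<nu>. x \<in> Vf W t} \<noteq> {}" by (intro notI) simp
        then have "\<sigma> \<in> bd K \<nu>" using vx by auto
        then show "\<nu> \<in> cobd K \<sigma>" using \<nu> unfolding bd_def cobd_def by auto
      next
        fix \<nu> assume "\<nu> \<in> cobd K \<sigma>"
        then have \<nu>: "\<nu> \<in> K" "\<sigma> \<in> bd K \<nu>" using pr unfolding bd_def cobd_def by auto
        then have "{t \<in> bd K \<nu>. x \<in> Vf W t} = {\<sigma>}" using vx by auto
        then show "\<nu> \<in> ?B" using \<nu> by (simp add: lin_mem)
      qed
      then show ?thesis using Cf5[OF sL] by simp
    next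
      case False
      have "?B = {}"
      proof (rule ccontr)
        assume "?B \<noteq> {}"
        then obtain \<nu> where "x \<in> lin (Vf W) (bd K \<nu>)" by blast
        then obtain t where "x \<in> Vf W t" using lin_sub[of "Vf W" "bd K \<nu>"] by blast
        then have "Expand t x \<in> set W" by (simp add: Vf_def)
        then show False using False upper_reg_def by blast
      qed
      then show ?thesis by (simp only: lin_empty)
    qed
    ultimately have "lin ?C ?T = ?C x" by (simp add: symd_def)
    moreover have "x \<in> ext_ref K W \<kappa> \<longleftrightarrow> \<kappa> \<in> ?C x"
      unfolding ext_ref_def using Cf1 by auto
    ultimately show ?thesis using l1 by simp
  qed
  then show ?thesis unfolding flow_eq by blast
qed

lemma coflow_ext: "coflow K W (ext_coref K W \<kappa>) = ext_coref K W \<kappa>"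
proof -
  let ?C = "ref_map K W"
  have "x \<in> lin gC (ext_coref K W \<kappa>) \<longleftrightarrow> x \<in> ext_coref K W \<kappa>" for x
  proof -
    let ?T = "{\<nu> \<in> K. x \<in> gC \<nu>}"
    let ?A = "{\<nu> \<in> K. x \<in> lin (cobd K) (Vs W \<nu>)}"
    let ?B = "{\<nu> \<in> K. x \<in> lin (Vs W) (cobd K \<nu>)}"
    have l1: "x \<in> lin gC (ext_coref K W \<kappa>) \<longleftrightarrow> \<kappa> \<in> lin ?C ?T"
      unfolding ext_coref_def by (rule transp)
    have T: "?T = symd (symd ({x} \<inter> K) ?A) ?B"
    proof (rule set_eqI)
      fix \<nu>
      show "\<nu> \<in> ?T \<longleftrightarrow> \<nu> \<in> symd (symd ({x} \<inter> K) ?A) ?B"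
      proof (cases "\<nu> \<in> K")
        case True then show ?thesis unfolding gC_def symd_mem by auto
      next
        case False then show ?thesis by simp
      qed
    qed
    have fA: "finite ?A" "finite ?B" "finite ({x} \<inter> K)" using finK by auto
    have "lin ?C ?T = symd (symd (lin ?C ({x} \<inter> K)) (lin ?C ?A)) (lin ?C ?B)"
      unfolding T using fA by (simp add: lin_symd symd_finite)
    moreover have "lin ?C ({x} \<inter> K) = ?C x"
      by (cases "x \<in> K") (auto simp: Rf1)
    moreover have "lin ?C ?A = {}"
    proof (rule lin_zero)
      fix \<nu> assume "\<nu> \<in> ?A"
      then have "Vs W \<nu> \<noteq> {}" by auto
      then have "\<nu> \<in> upper_reg W" using Vs_not by blast
      then show "?C \<nu> = {}" using Rf4 by blast
    qed
    moreover have "lin ?C ?B = {}"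
    proof (cases "x \<in> lower_reg W")
      case True
      then obtain \<tau> where e: "Expand x \<tau> \<in> set W" unfolding lower_reg_def by blast
      have tU: "\<tau> \<in> upper_reg W" using e upper_reg_def by blast
      have pr: "\<tau> \<in> K" using exp_pair[OF e] by simp
      have vx: "x \<in> Vs W t \<longleftrightarrow> t = \<tau>" for t
      proof -
        have "x \<in> Vs W t \<longleftrightarrow> t \<in> Vf W x" by (simp add: Vf_def Vs_def)
        then show ?thesis using Vf_eq[OF e] by simp
      qed
      have "?B = bd K \<tau>"
      proof (intro set_eqI iffI)
        fix \<nu> assume "\<nu> \<in> ?B"
        then have \<nu>: "\<nu> \<in> K" "odd (card {t \<in> cobd K \<nu>. x \<in> Vs W t})" by (auto simp: lin_mem)
        then have "{t \<in> cobd K \<nu>. x \<in> Vs W t} \<noteq> {}" by (intro notI) simp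
        then have "\<tau> \<in> cobd K \<nu>" using vx by auto
        then show "\<nu> \<in> bd K \<tau>" using \<nu> unfolding bd_def cobd_def by auto
      next
        fix \<nu> assume "\<nu> \<in> bd K \<tau>"
        then have \<nu>: "\<nu> \<in> K" "\<tau> \<in> cobd K \<nu>" using pr unfolding bd_def cobd_def by auto
        then have "{t \<in> cobd K \<nu>. x \<in> Vs W t} = {\<tau>}" using vx by auto
        then show "\<nu> \<in> ?B" using \<nu> by (simp add: lin_mem)
      qed
      then show ?thesis using Rf5[OF tU] by simp
    next
      case False
      have "?B = {}"
      proof (rule ccontr)
        assume "?B \<noteq> {}"
        then obtain \<nu> where "x \<in> lin (Vs W) (cobd K \<nu>)" by blast
        then obtain t where "x \<in> Vs W t" using lin_sub[of "Vs W" "cobd K \<nu>"] by blast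
        then have "Expand x t \<in> set W" by (simp add: Vs_def)
        then show False using False lower_reg_def by blast
      qed
      then show ?thesis by (simp only: lin_empty)
    qed
    ultimately have "lin ?C ?T = ?C x" by (simp add: symd_def)
    moreover have "x \<in> ext_coref K W \<kappa> \<longleftrightarrow> \<kappa> \<in> ?C x"
      unfolding ext_coref_def using Rf1 by auto
    ultimately show ?thesis using l1 by simp
  qed
  then show ?thesis unfolding coflow_eq by blast
qed

end


context MS
begin

lemma simp_K: "simplices K p \<subseteq> K" unfolding simplices_def by blast

lemma fb_fix: "flow K W c = c \<Longrightarrow> flow_bar K W c = c"
proof -
  assume h: "flow K W c = c"
  have "(LEAST i. (flow K W ^^ Suc i) c = (flow K W ^^ i) c) = 0"
    by (rule Least_eq_0) (simp add: h)
  then show ?thesis unfolding flow_bar_def by simp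
qed

lemma cfb_fix: "coflow K W c = c \<Longrightarrow> coflow_bar K W c = c"
proof -
  assume h: "coflow K W c = c"
  have "(LEAST i. (coflow K W ^^ Suc i) c = (coflow K W ^^ i) c) = 0"
    by (rule Least_eq_0) (simp add: h)
  then show ?thesis unfolding coflow_bar_def by simp
qed

lemma fb_back: assumes c: "c \<subseteq> K" and h: "flow_bar K W c = c" shows "flow K W c = c"
proof -
  have ex: "\<exists>i. (flow K W ^^ Suc i) c = (flow K W ^^ i) c"
    using tri.stab_all[OF tri_flow c] unfolding flow_eq .
  let ?i = "LEAST i. (flow K W ^^ Suc i) c = (flow K W ^^ i) c"
  have a: "(flow K W ^^ Suc ?i) c = (flow K W ^^ ?i) c" by (rule LeastI_ex[OF ex])
  have b: "(flow K W ^^ ?i) c = c" using h unfolding flow_bar_def .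
  have "flow K W c = flow K W ((flow K W ^^ ?i) c)" using b by simp
  also have "\<dots> = (flow K W ^^ Suc ?i) c" by simp
  also have "\<dots> = c" using a b by simp
  finally show ?thesis .
qed

lemma cfb_back: assumes c: "c \<subseteq> K" and h: "coflow_bar K W c = c" shows "coflow K W c = c"
proof -
  have ex: "\<exists>i. (coflow K W ^^ Suc i) c = (coflow K W ^^ i) c"
    using tri.stab_all[OF tri_coflow c] unfolding coflow_eq .
  let ?i = "LEAST i. (coflow K W ^^ Suc i) c = (coflow K W ^^ i) c"
  have a: "(coflow K W ^^ Suc ?i) c = (coflow K W ^^ ?i) c" by (rule LeastI_ex[OF ex])
  have b: "(coflow K W ^^ ?i) c = c" using h unfolding coflow_bar_def .
  have "coflow K W c = coflow K W ((coflow K W ^^ ?i) c)" using b by simp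
  also have "\<dots> = (coflow K W ^^ Suc ?i) c" by simp
  also have "\<dots> = c" using a b by simp
  finally show ?thesis .
qed

lemma E_sub: "ext_ref K W \<kappa> \<subseteq> K" unfolding ext_ref_def by blast
lemma E'_sub: "ext_coref K W \<kappa> \<subseteq> K" unfolding ext_coref_def by blast

lemma E_dim: "\<kappa> \<in> simplices K p \<Longrightarrow> ext_ref K W \<kappa> \<subseteq> simplices K p"
proof
  fix \<nu> assume k: "\<kappa> \<in> simplices K p" and n: "\<nu> \<in> ext_ref K W \<kappa>"
  then have \<nu>: "\<nu> \<in> K" "\<kappa> \<in> coref_map K W \<nu>" unfolding ext_ref_def by auto
  then have "card \<kappa> = card \<nu>" using Cf2[OF \<nu>(1)] by blast
  then show "\<nu> \<in> simplices K p" using k \<nu> unfolding simplices_def by simp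
qed

lemma E'_dim: "\<kappa> \<in> simplices K p \<Longrightarrow> ext_coref K W \<kappa> \<subseteq> simplices K p"
proof
  fix \<nu> assume k: "\<kappa> \<in> simplices K p" and n: "\<nu> \<in> ext_coref K W \<kappa>"
  then have \<nu>: "\<nu> \<in> K" "\<kappa> \<in> ref_map K W \<nu>" unfolding ext_coref_def by auto
  then have "card \<kappa> = card \<nu>" using Rf2[OF \<nu>(1)] by blast
  then show "\<nu> \<in> simplices K p" using k \<nu> unfolding simplices_def by simp
qed

lemma E_crit: "\<nu> \<in> crit W \<Longrightarrow> \<nu> \<in> ext_ref K W \<kappa> \<longleftrightarrow> \<kappa> = \<nu>"
  unfolding ext_ref_def using Cf3 crit_K by auto

lemma E'_crit: "\<nu> \<in> crit W \<Longrightarrow> \<nu> \<in> ext_coref K W \<kappa> \<longleftrightarrow> \<kappa> = \<nu>"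
  unfolding ext_coref_def using Rf3 crit_K by auto

lemma flow_linE: "finite ks \<Longrightarrow> flow K W (lin (ext_ref K W) ks) = lin (ext_ref K W) ks"
proof -
  assume fk: "finite ks"
  have fe: "finite (ext_ref K W \<kappa>)" for \<kappa> using E_sub finK finite_subset by blast
  have "lin gF (lin (ext_ref K W) ks) = lin (\<lambda>\<kappa>. lin gF (ext_ref K W \<kappa>)) ks"
    using lin_comp[OF fk, of "ext_ref K W" gF] fe by blast
  also have "\<dots> = lin (ext_ref K W) ks"
  proof (rule lin_cong)
    fix \<kappa> show "lin gF (ext_ref K W \<kappa>) = ext_ref K W \<kappa>" using flow_ext[of \<kappa>] unfolding flow_eq .
  qed
  finally show ?thesis unfolding flow_eq .
qed

lemma coflow_linE: "finite ks \<Longrightarrow> coflow K W (lin (ext_coref K W) ks) = lin (ext_coref K W) ks"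
proof -
  assume fk: "finite ks"
  have fe: "finite (ext_coref K W \<kappa>)" for \<kappa> using E'_sub finK finite_subset by blast
  have "lin gC (lin (ext_coref K W) ks) = lin (\<lambda>\<kappa>. lin gC (ext_coref K W \<kappa>)) ks"
    using lin_comp[OF fk, of "ext_coref K W" gC] fe by blast
  also have "\<dots> = lin (ext_coref K W) ks"
  proof (rule lin_cong)
    fix \<kappa> show "lin gC (ext_coref K W \<kappa>) = ext_coref K W \<kappa>" using coflow_ext[of \<kappa>] unfolding coflow_eq .
  qed
  finally show ?thesis unfolding coflow_eq .
qed

lemma crit_part: assumes \<nu>: "\<nu> \<in> crit W" and E: "\<And>\<kappa>. \<nu> \<in> E \<kappa> \<longleftrightarrow> \<kappa> = \<nu>"
  shows "\<nu> \<in> lin E ks \<longleftrightarrow> \<nu> \<in> ks"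
proof -
  have "{\<kappa> \<in> ks. \<nu> \<in> E \<kappa>} = (if \<nu> \<in> ks then {\<nu>} else {})" using E by auto
  then show ?thesis by (simp add: lin_mem)
qed

lemma over: "O_over K W p = {c. c \<subseteq> simplices K p \<and> flow_bar K W c = c}"
proof (intro equalityI subsetI)
  fix c assume "c \<in> O_over K W p"
  then obtain ks where ks0: "ks \<in> Pow (crit W \<inter> simplices K p)" and c: "c = lin (ext_ref K W) ks"
    unfolding O_over_def by (rule imageE)
  then have ks: "ks \<subseteq> crit W \<inter> simplices K p" by simp
  have "ks \<subseteq> K" using ks simp_K by blast
  then have fk: "finite ks" using finK by (rule finite_subset)
  have "\<Union> (ext_ref K W ` ks) \<subseteq> simplices K p"
  proof (rule UN_least)
    fix \<kappa> assume "\<kappa> \<in> ks"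
    then have "\<kappa> \<in> simplices K p" using ks by blast
    then show "ext_ref K W \<kappa> \<subseteq> simplices K p" by (rule E_dim)
  qed
  then have "c \<subseteq> simplices K p"
    using c lin_sub[of "ext_ref K W" ks] by (rule_tac subset_trans) simp_all
  moreover have "flow_bar K W c = c" using fb_fix flow_linE[OF fk] c by simp
  ultimately show "c \<in> {c. c \<subseteq> simplices K p \<and> flow_bar K W c = c}" by blast
next
  fix c assume "c \<in> {c. c \<subseteq> simplices K p \<and> flow_bar K W c = c}"
  then have cs: "c \<subseteq> simplices K p" and fb: "flow_bar K W c = c" by auto
  have cK: "c \<subseteq> K" using cs simp_K by blast
  have fc: "flow K W c = c" using fb_back[OF cK fb] .
  let ?ks = "c \<inter> crit W"
  let ?L = "lin (ext_ref K W) ?ks"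
  have "?ks \<subseteq> K" using cK by blast
  then have fk: "finite ?ks" using finK by (rule finite_subset)
  have LK: "?L \<subseteq> K" using lin_sub[of "ext_ref K W" ?ks] E_sub by blast
  have fL: "flow K W ?L = ?L" using flow_linE[OF fk] .
  let ?d = "symd c ?L"
  have dK: "?d \<subseteq> K" using cK LK unfolding symd_def by blast
  have f1: "finite c" using cK finK by (rule finite_subset)
  have f2: "finite ?L" using LK finK by (rule finite_subset)
  have "lin gF ?d = symd (lin gF c) (lin gF ?L)"
    using lin_symd[OF f1 f2] .
  then have fd: "lin gF ?d = ?d" using fc fL unfolding flow_eq by simp
  have nc: "?d \<inter> crit W = {}"
  proof -
    have "\<nu> \<notin> ?d" if "\<nu> \<in> crit W" for \<nu>
      using crit_part[OF that E_crit[OF that], of ?ks] that by simp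
    then show ?thesis by blast
  qed
  have "?d = {}" using tri.fix_zero[OF tri_flow dK fd nc] .
  then have cL: "c = ?L" by (simp add: symd_empty_iff)
  have kP: "?ks \<in> Pow (crit W \<inter> simplices K p)" using cs by blast
  show "c \<in> O_over K W p" unfolding O_over_def using rev_image_eqI[where f="lin (ext_ref K W)", OF kP cL] .
qed

lemma under: "O_under K W p = {c. c \<subseteq> simplices K p \<and> coflow_bar K W c = c}"
proof (intro equalityI subsetI)
  fix c assume "c \<in> O_under K W p"
  then obtain ks where ks0: "ks \<in> Pow (crit W \<inter> simplices K p)" and c: "c = lin (ext_coref K W) ks"
    unfolding O_under_def by (rule imageE)
  then have ks: "ks \<subseteq> crit W \<inter> simplices K p" by simp
  have "ks \<subseteq> K" using ks simp_K by blast
  then have fk: "finite ks" using finK by (rule finite_subset)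
  have "\<Union> (ext_coref K W ` ks) \<subseteq> simplices K p"
  proof (rule UN_least)
    fix \<kappa> assume "\<kappa> \<in> ks"
    then have "\<kappa> \<in> simplices K p" using ks by blast
    then show "ext_coref K W \<kappa> \<subseteq> simplices K p" by (rule E'_dim)
  qed
  then have "c \<subseteq> simplices K p"
    using c lin_sub[of "ext_coref K W" ks] by (rule_tac subset_trans) simp_all
  moreover have "coflow_bar K W c = c" using cfb_fix coflow_linE[OF fk] c by simp
  ultimately show "c \<in> {c. c \<subseteq> simplices K p \<and> coflow_bar K W c = c}" by blast
next
  fix c assume "c \<in> {c. c \<subseteq> simplices K p \<and> coflow_bar K W c = c}"
  then have cs: "c \<subseteq> simplices K p" and fb: "coflow_bar K W c = c" by auto
  have cK: "c \<subseteq> K" using cs simp_K by blast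
  have fc: "coflow K W c = c" using cfb_back[OF cK fb] .
  let ?ks = "c \<inter> crit W"
  let ?L = "lin (ext_coref K W) ?ks"
  have "?ks \<subseteq> K" using cK by blast
  then have fk: "finite ?ks" using finK by (rule finite_subset)
  have LK: "?L \<subseteq> K" using lin_sub[of "ext_coref K W" ?ks] E'_sub by blast
  have fL: "coflow K W ?L = ?L" using coflow_linE[OF fk] .
  let ?d = "symd c ?L"
  have dK: "?d \<subseteq> K" using cK LK unfolding symd_def by blast
  have f1: "finite c" using cK finK by (rule finite_subset)
  have f2: "finite ?L" using LK finK by (rule finite_subset)
  have "lin gC ?d = symd (lin gC c) (lin gC ?L)"
    using lin_symd[OF f1 f2] .
  then have fd: "lin gC ?d = ?d" using fc fL unfolding coflow_eq by simp
  have nc: "?d \<inter> crit W = {}"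
  proof -
    have "\<nu> \<notin> ?d" if "\<nu> \<in> crit W" for \<nu>
      using crit_part[OF that E'_crit[OF that], of ?ks] that by simp
    then show ?thesis by blast
  qed
  have "?d = {}" using tri.fix_zero[OF tri_coflow dK fd nc] .
  then have cL: "c = ?L" by (simp add: symd_empty_iff)
  have kP: "?ks \<in> Pow (crit W \<inter> simplices K p)" using cs by blast
  show "c \<in> O_under K W p" unfolding O_under_def using rev_image_eqI[where f="lin (ext_coref K W)", OF kP cL] .
qed

end

theorem corollary2:
  fixes K :: "'a set set" and W :: "'a step list" and p :: nat
  assumes "morse_seq K W"
  shows "O_over K W p = {c. c \<subseteq> simplices K p \<and> flow_bar K W c = c}
       \<and> O_under K W p = {c. c \<subseteq> simplices K p \<and> coflow_bar K W c = c}"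
proof -
  interpret MS K W by (rule MS.intro) (rule assms)
  show ?thesis using over[of p] under[of p] by (rule conjI)
qed


end
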